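(* Let $k\in\mathbb{N}$ and let $G$ be a graph on $n\geq k(k+1)$ vertices with $\delta:=\delta(G)\geq\frac{(k-1)n}{k}$. Then $G$ contains $\min\left\{k\delta-(k-1)n,\left\lfloor\frac{n}{k+1}\right\rfloor\right\}$ vertex-disjoint copies of $K_{k+1}$. *)

theory Defs
  imports Complex_Main
begin

definition simple_graph :: "'a set \<Rightarrow> ('a \<Rightarrow> 'a \<Rightarrow> bool) \<Rightarrow> bool" where
  "simple_graph V E \<longleftrightarrow> finite V \<and> (\<forall>u v. E u v \<longrightarrow> u \<in> V \<and> v \<in> V)
     \<and> (\<forall>u v. E u v \<longrightarrow> E v u) \<and> (\<forall>v. \<not> E v v)"

definition degree :: "'a set \<Rightarrow> ('a \<Rightarrow> 'a \<Rightarrow> bool) \<Rightarrow> 'a \<Rightarrow> nat" where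
  "degree V E v = card {u \<in> V. E v u}"

definition min_degree :: "'a set \<Rightarrow> ('a \<Rightarrow> 'a \<Rightarrow> bool) \<Rightarrow> nat" where
  "min_degree V E = Min (degree V E ` V)"

definition is_clique_copy :: "'a set \<Rightarrow> ('a \<Rightarrow> 'a \<Rightarrow> bool) \<Rightarrow> nat \<Rightarrow> 'a set \<Rightarrow> bool" where
  "is_clique_copy V E r S \<longleftrightarrow> S \<subseteq> V \<and> card S = r \<and> (\<forall>u\<in>S. \<forall>v\<in>S. u \<noteq> v \<longrightarrow> E u v)"

end

theory Submission
  imports Defs
begin


definition cl :: "'a set \<Rightarrow> ('a \<Rightarrow> nat) \<Rightarrow> nat \<Rightarrow> 'a set" where
  "cl V f i = {v \<in> V. f v = i}"

definition mov :: "'a set \<Rightarrow> ('a \<Rightarrow> 'a \<Rightarrow> bool) \<Rightarrow> ('a \<Rightarrow> nat) \<Rightarrow> 'a \<Rightarrow> nat \<Rightarrow> bool" where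
  "mov V E f x j \<longleftrightarrow> (\<forall>u \<in> cl V f j. \<not> E x u)"

definition arc :: "'a set \<Rightarrow> ('a \<Rightarrow> 'a \<Rightarrow> bool) \<Rightarrow> ('a \<Rightarrow> nat) \<Rightarrow> nat \<Rightarrow> nat \<Rightarrow> bool" where
  "arc V E f i j \<longleftrightarrow> i \<noteq> j \<and> (\<exists>x \<in> cl V f i. mov V E f x j)"

definition rs :: "('b \<Rightarrow> 'b \<Rightarrow> bool) \<Rightarrow> 'b set \<Rightarrow> 'b \<Rightarrow> 'b \<Rightarrow> bool" where
  "rs R S x y \<longleftrightarrow> x \<in> S \<and> y \<in> S \<and> R x y"

definition proper :: "('a \<Rightarrow> 'a \<Rightarrow> bool) \<Rightarrow> ('a \<Rightarrow> nat) \<Rightarrow> bool" where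
  "proper E f \<longleftrightarrow> (\<forall>u v. E u v \<longrightarrow> f u \<noteq> f v)"

lemma successively_mono_tail:
  "successively P (a # xs) \<Longrightarrow> (\<And>x y. x \<in> set (a # xs) \<Longrightarrow> y \<in> set xs \<Longrightarrow> P x y \<Longrightarrow> Q x y)
   \<Longrightarrow> successively Q (a # xs)"
proof (induction xs arbitrary: a)
  case Nil
  then show ?case by simp
next
  case (Cons b xs)
  have sb: "successively P (b # xs)" using Cons.prems(1) by simp
  have "successively Q (b # xs)"
  proof (rule Cons.IH[OF sb])
    fix x y assume "x \<in> set (b # xs)" "y \<in> set xs" "P x y"
    then show "Q x y" by (intro Cons.prems(2)) auto
  qed
  moreover have "P a b" using Cons.prems(1) by simp
  then have "Q a b" by (intro Cons.prems(2)) auto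
  ultimately show ?case by simp
qed

lemma rtranclp_distinct_path:
  assumes "R\<^sup>*\<^sup>* i j"
  shows "\<exists>ps. distinct (i # ps) \<and> last (i # ps) = j \<and> successively R (i # ps)"
  using assms
proof (induction rule: converse_rtranclp_induct)
  case base
  then show ?case by (intro exI[of _ "[]"]) auto
next
  case (step i i')
  then obtain ps where ps: "distinct (i' # ps)" "last (i' # ps) = j" "successively R (i' # ps)" by blast
  show ?case
  proof (cases "i \<in> set (i' # ps)")
    case False
    then show ?thesis using ps step(1) by (intro exI[of _ "i' # ps"]) auto
  next
    case True
    then obtain us vs where uv: "i' # ps = us @ i # vs" by (meson split_list)
    have "distinct (i # vs)" using ps(1) uv by (metis distinct_append)
    moreover have "last (i # vs) = j" using ps(2) uv by (metis last_appendR list.distinct(1))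
    moreover have "successively R (i # vs)" using ps(3) uv
      by (metis successively_append_iff)
    ultimately show ?thesis by blast
  qed
qed

lemma card_cl_upd:
  assumes "finite V" "x \<in> V" "f x = c" "c \<noteq> c'"
  shows "card (cl V (f(x := c')) i) = (if i = c then card (cl V f i) - 1 else if i = c' then Suc (card (cl V f i)) else card (cl V f i))"
proof -
  have fin: "finite (cl V f i)" for i using assms(1) unfolding cl_def by auto
  have "cl V (f(x := c')) i = (if i = c then cl V f i - {x} else if i = c' then insert x (cl V f i) else cl V f i)"
    using assms unfolding cl_def by auto
  moreover have "x \<in> cl V f c" using assms unfolding cl_def by auto
  moreover have "x \<notin> cl V f c'" using assms unfolding cl_def by auto
  ultimately show ?thesis using fin by auto
qed

lemma proper_upd:
  assumes "proper E f" "mov V E f x j" "\<And>u v. E u v \<Longrightarrow> u \<in> V \<and> v \<in> V" "\<And>u v. E u v \<Longrightarrow> E v u" "\<And>v. \<not> E v v"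
  shows "proper E (f(x := j))"
  unfolding proper_def
proof (intro allI impI)
  fix u v assume e: "E u v"
  show "(f(x := j)) u \<noteq> (f(x := j)) v"
  proof (cases "u = x")
    case True
    then have "v \<noteq> x" using e assms(5) by auto
    moreover have "f v \<noteq> j" using assms(2) e True assms(3) unfolding mov_def cl_def by auto
    ultimately show ?thesis using True by auto
  next
    case False
    note F = this
    show ?thesis
    proof (cases "v = x")
      case True
      have "f u \<noteq> j" using assms(2) assms(4)[OF e] True assms(3)[OF e] unfolding mov_def cl_def by auto
      then show ?thesis using F True by auto
    next
      case False
      then show ?thesis using F e assms(1) unfolding proper_def by auto
    qed
  qed
qed

lemma arc_transfer:
  assumes "arc V E f p q" "cl V f p \<subseteq> cl V g p" "cl V g q = cl V f q"
  shows "arc V E g p q"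
  using assms unfolding arc_def mov_def by auto

lemma path_transfer:
  assumes "successively (arc V E f) (c # cs)"
    "\<And>i. i \<in> set cs \<Longrightarrow> cl V g i = cl V f i" "cl V f c \<subseteq> cl V g c"
  shows "successively (arc V E g) (c # cs)"
proof (rule successively_mono_tail[OF assms(1)])
  fix x y assume xy: "x \<in> set (c # cs)" "y \<in> set cs" "arc V E f x y"
  have "cl V f x \<subseteq> cl V g x" using xy(1) assms(2,3) by auto
  then show "arc V E g x y" using arc_transfer[OF xy(3)] assms(2)[OF xy(2)] by auto
qed

lemma shift:
  assumes "successively (arc V E f) (c # cs)" "distinct (c # cs)" "proper E f" "finite V"
    "\<And>u v. E u v \<Longrightarrow> u \<in> V \<and> v \<in> V" "\<And>u v. E u v \<Longrightarrow> E v u" "\<And>v. \<not> E v v"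
  shows "\<exists>g. proper E g \<and> (\<forall>v. f v \<notin> set (c # cs) \<longrightarrow> g v = f v)
     \<and> (\<forall>v. f v \<in> set (c # cs) \<longrightarrow> g v \<in> set (c # cs))
     \<and> (\<forall>i. card (cl V g i) + (if i = c then 1 else 0) = card (cl V f i) + (if i = last (c # cs) then 1 else 0))"
  using assms(1-3)
proof (induction cs arbitrary: c f)
  case Nil
  then show ?case by (intro exI[of _ f]) auto
next
  case (Cons c' cs)
  have a: "arc V E f c c'" using Cons.prems(1) by simp
  then obtain x where x: "x \<in> cl V f c" "mov V E f x c'" "c \<noteq> c'" unfolding arc_def by blast
  have xV: "x \<in> V" "f x = c" using x(1) unfolding cl_def by auto
  define f1 where "f1 = f(x := c')"
  have p1: "proper E f1" unfolding f1_def using proper_upd[OF Cons.prems(3) x(2) assms(5-7)] by blast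
  have cl1: "cl V f1 i = (if i = c then cl V f i - {x} else if i = c' then insert x (cl V f i) else cl V f i)" for i
    using xV x(3) unfolding f1_def cl_def by auto
  have s1: "successively (arc V E f1) (c' # cs)"
  proof (rule path_transfer)
    show "successively (arc V E f) (c' # cs)" using Cons.prems(1) by simp
    show "cl V f1 i = cl V f i" if "i \<in> set cs" for i
      using that Cons.prems(2) cl1[of i] by auto
    show "cl V f c' \<subseteq> cl V f1 c'" using cl1[of c'] x(3) by auto
  qed
  have d1: "distinct (c' # cs)" using Cons.prems(2) by simp
  obtain g where g: "proper E g" "\<forall>v. f1 v \<notin> set (c' # cs) \<longrightarrow> g v = f1 v"
    "\<forall>v. f1 v \<in> set (c' # cs) \<longrightarrow> g v \<in> set (c' # cs)"
    "\<forall>i. card (cl V g i) + (if i = c' then 1 else 0) = card (cl V f1 i) + (if i = last (c' # cs) then 1 else 0)"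
    using Cons.IH[OF s1 d1 p1] by blast
  have cc1: "card (cl V f1 i) = (if i = c then card (cl V f i) - 1 else if i = c' then Suc (card (cl V f i)) else card (cl V f i))" for i
    unfolding f1_def using card_cl_upd[of V x f c c' i] assms(4) xV x(3) by blast
  have finc: "finite (cl V f c)" using assms(4) unfolding cl_def by simp
  have "cl V f c \<noteq> {}" using x(1) by auto
  then have pos: "card (cl V f c) \<ge> 1" using finc by (simp add: Suc_le_eq card_gt_0_iff)
  have lastne: "last (c # c' # cs) \<noteq> c" using Cons.prems(2) last_in_set[of "c' # cs"] by auto
  have lasteq: "last (c # c' # cs) = last (c' # cs)" by simp
  show ?case
  proof (intro exI[of _ g] conjI allI impI)
    show "proper E g" by (rule g(1))
  next
    fix v assume fv: "f v \<notin> set (c # c' # cs)"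
    then have "v \<noteq> x" using xV by auto
    then have "f1 v = f v" unfolding f1_def by simp
    then show "g v = f v" using g(2) fv by auto
  next
    fix v assume "f v \<in> set (c # c' # cs)"
    then show "g v \<in> set (c # c' # cs)"
    proof (cases "v = x")
      case True
      then have "f1 v = c'" unfolding f1_def by simp
      then show ?thesis using g(3) by auto
    next
      case False
      then have "f1 v = f v" unfolding f1_def by simp
      then show ?thesis using g(2,3) \<open>f v \<in> set (c # c' # cs)\<close> by (cases "f v = c") (use xV in auto)
    qed
  next
    fix i
    show "card (cl V g i) + (if i = c then 1 else 0) = card (cl V f i) + (if i = last (c # c' # cs) then 1 else 0)"
    proof -
      have e: "card (cl V g i) + (if i = c' then 1 else 0) = card (cl V f1 i) + (if i = last (c' # cs) then 1 else 0)"
        using g(4) by blast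
      show ?thesis
      proof (cases "i = c")
        case True
        then have "i \<noteq> c'" "i \<noteq> last (c # c' # cs)" using x(3) lastne by auto
        then show ?thesis using e cc1[of i] True pos lasteq by simp
      next
        case False
        then show ?thesis using e cc1[of i] lasteq by (cases "i = c'") auto
      qed
    qed
  qed
qed


lemma rs_mono: assumes "S \<subseteq> T" "(rs R S)\<^sup>*\<^sup>* x y" shows "(rs R T)\<^sup>*\<^sup>* x y"
  using assms(2)
proof (induction rule: rtranclp_induct)
  case base then show ?case by simp
next
  case (step y z)
  then have "rs R T y z" using assms(1) unfolding rs_def by auto
  then show ?case using step by (meson rtranclp.rtrancl_into_rtrancl)
qed

lemma rs_notin: assumes "(rs R S)\<^sup>*\<^sup>* x t" "t \<notin> S" shows "x = t"
  using assms
proof (induction rule: converse_rtranclp_induct)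
  case base then show ?case by simp
next
  case (step y z)
  then show ?case unfolding rs_def by auto
qed

lemma rs_in: assumes "(rs R S)\<^sup>*\<^sup>* x t" "x \<noteq> t" shows "x \<in> S"
  using assms by (induction rule: converse_rtranclp_induct) (auto simp: rs_def)

lemma len_pass:
  "(rs R S ^^ n) x t \<Longrightarrow> \<not> (rs R (S - {y}))\<^sup>*\<^sup>* x t \<Longrightarrow> x \<noteq> y \<Longrightarrow> \<exists>k<n. (rs R S ^^ k) y t"
proof (induction n arbitrary: x)
  case 0
  then show ?case by simp
next
  case (Suc n)
  obtain x' where x': "rs R S x x'" "(rs R S ^^ n) x' t" using relpowp_Suc_D2[OF Suc.prems(1)] by blast
  show ?case
  proof (cases "x' = y")
    case True
    then show ?thesis using x'(2) by auto
  next
    case False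
    have "\<not> (rs R (S - {y}))\<^sup>*\<^sup>* x' t"
    proof
      assume h: "(rs R (S - {y}))\<^sup>*\<^sup>* x' t"
      have "rs R (S - {y}) x x'" using x'(1) False Suc.prems(3) unfolding rs_def by auto
      then have "(rs R (S - {y}))\<^sup>*\<^sup>* x t" using h by (meson converse_rtranclp_into_rtranclp)
      then show False using Suc.prems(2) by simp
    qed
    then obtain k where "k < n" "(rs R S ^^ k) y t" using Suc.IH[OF x'(2) _ False] by blast
    then show ?thesis by (intro exI[of _ k]) auto
  qed
qed

lemma pass:
  assumes "(rs R S)\<^sup>*\<^sup>* x t" "\<not> (rs R (S - {u}))\<^sup>*\<^sup>* x t"
  shows "(rs R S)\<^sup>*\<^sup>* u t"
proof (cases "x = u")
  case True then show ?thesis using assms by simp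
next
  case False
  obtain n where "(rs R S ^^ n) x t" using rtranclp_imp_relpowp[OF assms(1)] by blast
  then obtain k where "(rs R S ^^ k) u t" using len_pass[OF _ assms(2) False] by blast
  then show ?thesis by (rule relpowp_imp_rtranclp)
qed

lemma no_mutual:
  assumes "(rs R S)\<^sup>*\<^sup>* U t" "(rs R S)\<^sup>*\<^sup>* Y t" "U \<noteq> Y"
    "\<not> (rs R (S - {Y}))\<^sup>*\<^sup>* U t" "\<not> (rs R (S - {U}))\<^sup>*\<^sup>* Y t"
  shows False
proof -
  obtain n1 where n1: "(rs R S ^^ n1) U t" using rtranclp_imp_relpowp[OF assms(1)] by blast
  obtain n2 where n2: "(rs R S ^^ n2) Y t" using rtranclp_imp_relpowp[OF assms(2)] by blast
  define a where "a = (LEAST n. (rs R S ^^ n) U t)"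
  define b where "b = (LEAST n. (rs R S ^^ n) Y t)"
  have a1: "(rs R S ^^ a) U t" unfolding a_def using n1 by (rule LeastI)
  have b1: "(rs R S ^^ b) Y t" unfolding b_def using n2 by (rule LeastI)
  obtain k where k: "k < a" "(rs R S ^^ k) Y t" using len_pass[OF a1 assms(4) assms(3)] by blast
  have "b \<le> k" unfolding b_def using k(2) by (rule Least_le)
  obtain k' where k': "k' < b" "(rs R S ^^ k') U t" using len_pass[OF b1 assms(5)] assms(3) by blast
  have "a \<le> k'" unfolding a_def using k'(2) by (rule Least_le)
  show False using k(1) k'(1) \<open>b \<le> k\<close> \<open>a \<le> k'\<close> by simp
qed

lemma dominator:
  fixes A :: "'b set" and R :: "'b \<Rightarrow> 'b \<Rightarrow> bool"
  assumes fin: "finite A" and lo: "lo \<in> A" and all: "\<forall>U\<in>A. (rs R A)\<^sup>*\<^sup>* U lo"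
    and T: "T = {W \<in> A. \<forall>U \<in> A - {W}. (rs R (A - {W}))\<^sup>*\<^sup>* U lo}"
    and deg: "\<forall>W\<in>T. k \<le> card {X \<in> A - {W}. R W X}"
  shows "k \<le> card T"
proof (cases "A = {lo}")
  case True
  then have "lo \<in> T" using T by auto
  then have "k \<le> card {X \<in> A - {lo}. R lo X}" using deg by blast
  then show ?thesis using True by simp
next
  case False
  then obtain U0 where U0: "U0 \<in> A" "U0 \<noteq> lo" using lo by blast
  define D where "D Y = {U \<in> A - {Y}. \<not> (rs R (A - {Y}))\<^sup>*\<^sup>* U lo}" for Y
  have finD: "finite (D Y)" for Y unfolding D_def using fin by auto
  have "U0 \<in> D lo" unfolding D_def using U0 rs_notin[of R "A - {lo}" U0 lo] by auto
  then have "lo \<in> A \<and> D lo \<noteq> {}" using lo by auto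
  then obtain Y where Y: "Y \<in> A \<and> D Y \<noteq> {}"
    and Ymin: "\<forall>Z. Z \<in> A \<and> D Z \<noteq> {} \<longrightarrow> card (insert Y (D Y)) \<le> card (insert Z (D Z))"
    using ex_has_least_nat[of "\<lambda>Y. Y \<in> A \<and> D Y \<noteq> {}" lo "\<lambda>Y. card (insert Y (D Y))"] by blast
  have DT: "D Y \<subseteq> T"
  proof
    fix U assume U: "U \<in> D Y"
    then have UA: "U \<in> A" "U \<noteq> Y" and nU: "\<not> (rs R (A - {Y}))\<^sup>*\<^sup>* U lo" unfolding D_def by auto
    show "U \<in> T"
    proof (rule ccontr)
      assume "U \<notin> T"
      then have DU: "D U \<noteq> {}" using UA unfolding T D_def by auto
      have sub: "insert U (D U) \<subseteq> insert Y (D Y) - {Y}"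
      proof
        fix U' assume U': "U' \<in> insert U (D U)"
        show "U' \<in> insert Y (D Y) - {Y}"
        proof (cases "U' = U")
          case True then show ?thesis using U UA by auto
        next
          case False
          then have U'D: "U' \<in> D U" using U' by auto
          then have U'A: "U' \<in> A" "U' \<noteq> U" and nU': "\<not> (rs R (A - {U}))\<^sup>*\<^sup>* U' lo" unfolding D_def by auto
          have U'Y: "U' \<noteq> Y"
          proof
            assume "U' = Y"
            then have "\<not> (rs R (A - {U}))\<^sup>*\<^sup>* Y lo" using nU' by simp
            moreover have "(rs R A)\<^sup>*\<^sup>* U lo" "(rs R A)\<^sup>*\<^sup>* Y lo" using all UA Y by auto
            ultimately show False using no_mutual[of R A U lo Y] UA(2) nU by blast
          qed
          have "\<not> (rs R (A - {Y}))\<^sup>*\<^sup>* U' lo"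
          proof
            assume h: "(rs R (A - {Y}))\<^sup>*\<^sup>* U' lo"
            show False
            proof (cases "(rs R (A - {Y} - {U}))\<^sup>*\<^sup>* U' lo")
              case True
              then have "(rs R (A - {U}))\<^sup>*\<^sup>* U' lo" by (rule rs_mono[rotated]) auto
              then show False using nU' by simp
            next
              case False
              then have "(rs R (A - {Y}))\<^sup>*\<^sup>* U lo" using pass[OF h] by blast
              then show False using nU by simp
            qed
          qed
          then have "U' \<in> D Y" unfolding D_def using U'A U'Y by auto
          then show ?thesis using U'Y by auto
        qed
      qed
      have "card (insert U (D U)) < card (insert Y (D Y))"
      proof (rule psubset_card_mono)
        show "finite (insert Y (D Y))" using finD by simp
        show "insert U (D U) \<subset> insert Y (D Y)" using sub by auto
      qed
      moreover have "card (insert Y (D Y)) \<le> card (insert U (D U))" using Ymin UA DU by blast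
      ultimately show False by simp
    qed
  qed
  obtain U where U: "U \<in> D Y" using Y by blast
  have UT: "U \<in> T" using DT U by blast
  have UA: "U \<in> A" "U \<noteq> Y" and nU: "\<not> (rs R (A - {Y}))\<^sup>*\<^sup>* U lo" using U unfolding D_def by auto
  have out: "{X \<in> A - {U}. R U X} \<subseteq> insert Y (D Y) - {U}"
  proof
    fix X assume X: "X \<in> {X \<in> A - {U}. R U X}"
    show "X \<in> insert Y (D Y) - {U}"
    proof (rule ccontr)
      assume "X \<notin> insert Y (D Y) - {U}"
      then have "X \<noteq> Y" "X \<notin> D Y" using X by auto
      then have hX: "(rs R (A - {Y}))\<^sup>*\<^sup>* X lo" using X unfolding D_def by auto
      have "rs R (A - {Y}) U X" using X UA \<open>X \<noteq> Y\<close> unfolding rs_def by auto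
      then have "(rs R (A - {Y}))\<^sup>*\<^sup>* U lo" using hX by (meson converse_rtranclp_into_rtranclp)
      then show False using nU by simp
    qed
  qed
  have "k \<le> card {X \<in> A - {U}. R U X}" using deg UT by blast
  also have "\<dots> \<le> card (insert Y (D Y) - {U})" using out finD by (intro card_mono) auto
  also have "\<dots> = card (D Y)"
  proof -
    have "Y \<notin> D Y" unfolding D_def by auto
    then show ?thesis using finD U UA by (simp add: card_insert_if)
  qed
  also have "\<dots> \<le> card T" using DT T fin by (intro card_mono) auto
  finally show ?thesis .
qed


lemma dc:
  assumes "finite X" "finite Y"
  shows "(\<Sum>x\<in>X. card {y\<in>Y. P x y}) = (\<Sum>y\<in>Y. card {x\<in>X. P x y})"
proof -
  have c1: "card {y\<in>Y. P x y} = (\<Sum>y\<in>Y. if P x y then 1 else 0)" for x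
    using assms by (simp flip: sum.inter_filter)
  have c2: "card {x\<in>X. P x y} = (\<Sum>x\<in>X. if P x y then 1 else 0)" for y
    using assms by (simp flip: sum.inter_filter)
  have "(\<Sum>x\<in>X. card {y\<in>Y. P x y}) = (\<Sum>x\<in>X. \<Sum>y\<in>Y. if P x y then 1 else 0)"
    using c1 by simp
  also have "\<dots> = (\<Sum>y\<in>Y. \<Sum>x\<in>X. if P x y then 1 else 0)" by (rule sum.swap)
  also have "\<dots> = (\<Sum>y\<in>Y. card {x\<in>X. P x y})"
    using c2 by simp
  finally show ?thesis .
qed

lemma per_terminal:
  fixes W B :: "'a set" and E :: "'a \<Rightarrow> 'a \<Rightarrow> bool" and b m :: nat
  assumes fin: "finite W" "finite B" and cW: "card W \<le> m" and cB: "card B = b * m + 1"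
    and cov: "\<forall>y\<in>B. \<exists>z\<in>W. E y z"
    and sym: "\<forall>u v. E u v \<longrightarrow> E v u"
    and solo: "\<forall>z\<in>W. (\<exists>y\<in>B. {u\<in>W. E y u} = {z}) \<longrightarrow> card {y\<in>B. E z y} \<le> b"
  shows "\<exists>z\<in>W. 2 * b + 1 \<le> card {y\<in>B. E z y}"
proof (rule ccontr)
  assume "\<not> ?thesis"
  then have small: "\<forall>z\<in>W. card {y\<in>B. E z y} \<le> 2 * b" by auto
  define N where "N y = {u\<in>W. E y u}" for y
  define S where "S z = {y\<in>B. N y = {z}}" for z
  have e1: "(\<Sum>z\<in>W. card {y\<in>B. E z y}) = (\<Sum>y\<in>B. card (N y))"
  proof -
    have "(\<Sum>z\<in>W. card {y\<in>B. E z y}) = (\<Sum>y\<in>B. card {z\<in>W. E z y})" by (rule dc[OF fin])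
    also have "\<dots> = (\<Sum>y\<in>B. card (N y))"
      unfolding N_def using sym by (intro sum.cong refl arg_cong[where f=card]) blast
    finally show ?thesis .
  qed
  have e2: "(\<Sum>z\<in>W. card (S z)) = (\<Sum>y\<in>B. (if card (N y) = 1 then 1 else 0))"
  proof -
    have "(\<Sum>z\<in>W. card (S z)) = (\<Sum>y\<in>B. card {z\<in>W. N y = {z}})"
      unfolding S_def by (rule dc[OF fin])
    also have "\<dots> = (\<Sum>y\<in>B. (if card (N y) = 1 then 1 else 0))"
    proof (rule sum.cong[OF refl])
      fix y assume y: "y \<in> B"
      show "card {z\<in>W. N y = {z}} = (if card (N y) = 1 then 1 else 0)"
      proof (cases "card (N y) = 1")
        case True
        then obtain z0 where z0: "N y = {z0}" by (meson card_1_singletonE)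
        then have "z0 \<in> W" unfolding N_def by auto
        then have "{z\<in>W. N y = {z}} = {z0}" using z0 by auto
        then show ?thesis using True by simp
      next
        case False
        have e: "{z\<in>W. N y = {z}} = {}" using False by auto
        show ?thesis using False by (subst e) simp
      qed
    qed
    finally show ?thesis .
  qed
  have ge2: "2 \<le> card (N y) + (if card (N y) = 1 then 1 else 0)" if y: "y \<in> B" for y
  proof -
    have "N y \<noteq> {}" using cov y unfolding N_def by auto
    moreover have "finite (N y)" using fin unfolding N_def by auto
    ultimately have "card (N y) \<ge> 1" by (simp add: Suc_le_eq card_gt_0_iff)
    then show ?thesis by auto
  qed
  have "2 * card B \<le> (\<Sum>y\<in>B. card (N y) + (if card (N y) = 1 then 1 else 0))"
  proof -
    have "(\<Sum>y\<in>B. (2::nat)) \<le> (\<Sum>y\<in>B. card (N y) + (if card (N y) = 1 then 1 else 0))"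
      using ge2 by (intro sum_mono) auto
    then show ?thesis by (simp add: mult.commute)
  qed
  also have "\<dots> = (\<Sum>z\<in>W. card {y\<in>B. E z y} + card (S z))"
    using e1 e2 by (simp add: sum.distrib)
  also have "\<dots> \<le> (\<Sum>z\<in>W. 2 * b)"
  proof (rule sum_mono)
    fix z assume z: "z \<in> W"
    show "card {y\<in>B. E z y} + card (S z) \<le> 2 * b"
    proof (cases "S z = {}")
      case True
      then show ?thesis using small z by simp
    next
      case False
      then obtain y where y: "y \<in> B" "N y = {z}" unfolding S_def by auto
      then have db: "card {y\<in>B. E z y} \<le> b" using solo z unfolding N_def by blast
      have "S z \<subseteq> {y\<in>B. E z y}" unfolding S_def N_def using sym by auto
      then have "card (S z) \<le> card {y\<in>B. E z y}" using fin by (intro card_mono) auto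
      then show ?thesis using db by simp
    qed
  qed
  also have "\<dots> = 2 * b * card W" by simp
  also have "\<dots> \<le> 2 * b * m" using cW by simp
  finally have "2 * card B \<le> 2 * b * m" .
  then show False using cB by simp
qed

lemma sigma_count:
  fixes TA B :: "'a set" and S :: "'a \<Rightarrow> 'a set" and d :: "'a \<Rightarrow> nat"
  assumes fin: "finite TA" "finite B" and cTA: "card TA \<le> t * m" and cB: "card B = b * m + 1"
    and b1: "1 \<le> b" and tb: "b \<le> t" and SB: "\<forall>z\<in>TA. S z \<subseteq> B"
    and H1: "\<forall>y\<in>B. t + 1 + d y \<le> card {z\<in>TA. y \<in> S z} + b"
    and Hd: "\<forall>y\<in>B. d y + 1 \<le> b"
    and H2: "\<forall>z\<in>TA. \<forall>y\<in>S z. card (S z) \<le> d y + 1"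
  shows False
proof -
  define g where "g y = 1 / real (d y + 1)" for y
  have finS: "finite (S z)" if "z \<in> TA" for z using SB fin(2) that finite_subset by blast
  have le1: "(\<Sum>y\<in>S z. g y) \<le> 1" if z: "z \<in> TA" for z
  proof (cases "S z = {}")
    case True then show ?thesis by simp
  next
    case False
    then have cpos: "card (S z) > 0" using finS[OF z] by (simp add: card_gt_0_iff)
    have "(\<Sum>y\<in>S z. g y) \<le> (\<Sum>y\<in>S z. 1 / real (card (S z)))"
    proof (rule sum_mono)
      fix y assume y: "y \<in> S z"
      have "real (card (S z)) \<le> real (d y + 1)" using H2 z y by (simp only: of_nat_le_iff)
      then show "g y \<le> 1 / real (card (S z))" unfolding g_def using cpos
        by (intro divide_left_mono) auto
    qed
    also have "\<dots> = 1" using cpos by simp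
    finally show ?thesis .
  qed
  have up: "(\<Sum>z\<in>TA. \<Sum>y\<in>S z. g y) \<le> real t * real m"
  proof -
    have "(\<Sum>z\<in>TA. \<Sum>y\<in>S z. g y) \<le> (\<Sum>z\<in>TA. (1::real))" using le1 by (intro sum_mono) auto
    also have "\<dots> = real (card TA)" by simp
    also have "\<dots> \<le> real (t * m)" using cTA by (simp only: of_nat_le_iff)
    also have "\<dots> = real t * real m" by simp
    finally show ?thesis .
  qed
  have swap: "(\<Sum>z\<in>TA. \<Sum>y\<in>S z. g y) = (\<Sum>y\<in>B. real (card {z\<in>TA. y \<in> S z}) * g y)"
  proof -
    have "(\<Sum>z\<in>TA. \<Sum>y\<in>S z. g y) = (\<Sum>z\<in>TA. \<Sum>y\<in>B. if y \<in> S z then g y else 0)"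
    proof (rule sum.cong[OF refl])
      fix z assume z: "z \<in> TA"
      have "(\<Sum>y\<in>B. if y \<in> S z then g y else 0) = (\<Sum>y\<in>B \<inter> S z. g y)"
        using fin(2) by (simp add: sum.If_cases)
      also have "B \<inter> S z = S z" using SB z by auto
      finally show "(\<Sum>y\<in>S z. g y) = (\<Sum>y\<in>B. if y \<in> S z then g y else 0)" by simp
    qed
    also have "\<dots> = (\<Sum>y\<in>B. \<Sum>z\<in>TA. if y \<in> S z then g y else 0)" by (rule sum.swap)
    also have "\<dots> = (\<Sum>y\<in>B. real (card {z\<in>TA. y \<in> S z}) * g y)"
    proof (rule sum.cong[OF refl])
      fix y assume "y \<in> B"
      have "(\<Sum>z\<in>TA. if y \<in> S z then g y else 0) = (\<Sum>z\<in>TA \<inter> {z. y \<in> S z}. g y)"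
        using fin(1) by (simp add: sum.If_cases)
      also have "TA \<inter> {z. y \<in> S z} = {z\<in>TA. y \<in> S z}" by auto
      finally show "(\<Sum>z\<in>TA. if y \<in> S z then g y else 0) = real (card {z\<in>TA. y \<in> S z}) * g y" by simp
    qed
    finally show ?thesis .
  qed
  have lowterm: "real t / real b \<le> real (card {z\<in>TA. y \<in> S z}) * g y" if y: "y \<in> B" for y
  proof -
    define s where "s = real (card {z\<in>TA. y \<in> S z})"
    define dd where "dd = real (d y)"
    have "real (t + 1 + d y) \<le> real (card {z\<in>TA. y \<in> S z} + b)" using H1 y by (simp only: of_nat_le_iff)
    then have h1: "real t + 1 + dd \<le> s + real b" unfolding s_def dd_def by simp
    have "real (d y + 1) \<le> real b" using Hd y by (simp only: of_nat_le_iff)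
    then have h2: "dd + 1 \<le> real b" unfolding dd_def by simp
    have h3: "real b \<le> real t" using tb by simp
    have bpos: "real b > 0" using b1 by simp
    have "(real t - real b) * (real b - 1 - dd) \<ge> 0" using h2 h3 by (intro mult_nonneg_nonneg) auto
    then have "real t * (dd + 1) \<le> (real t + 1 + dd - real b) * real b" by (simp add: algebra_simps)
    also have "\<dots> \<le> s * real b" using h1 bpos by (intro mult_right_mono) auto
    finally have key: "real t * (dd + 1) \<le> s * real b" .
    have ddpos: "dd + 1 > 0" unfolding dd_def by simp
    have "real t / real b \<le> s / (dd + 1)" using key bpos ddpos by (simp add: divide_simps)
    then show ?thesis unfolding g_def s_def dd_def by (simp add: add.commute)
  qed
  have "(\<Sum>y\<in>B. real t / real b) \<le> (\<Sum>y\<in>B. real (card {z\<in>TA. y \<in> S z}) * g y)"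
    using lowterm by (intro sum_mono) auto
  then have "real (card B) * (real t / real b) \<le> real t * real m" using up swap by simp
  then have "(real b * real m + 1) * real t \<le> real t * real m * real b" using b1 cB by (simp add: field_simps)
  then have "real t \<le> 0" by (simp add: algebra_simps)
  then show False using tb b1 by simp
qed

lemma claim1:
  fixes V :: "'a set" and f :: "'a \<Rightarrow> nat" and A T :: "nat set" and N :: "'a set"
  assumes finV: "finite V" and finA: "finite A" and TA: "T \<subseteq> A"
    and NA: "N \<subseteq> {v\<in>V. f v \<in> A}"
    and cov: "\<forall>i\<in>A. N \<inter> cl V f i \<noteq> {}"
  shows "card A + card T \<le> card N + card {z\<in>V. f z \<in> T \<and> N \<inter> cl V f (f z) = {z}}"
proof -
  have finN: "finite N" by (rule finite_subset[OF NA]) (use finV in simp)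
  have cN: "card N = (\<Sum>i\<in>A. card (N \<inter> cl V f i))"
  proof -
    have "N = (\<Union>i\<in>A. N \<inter> cl V f i)" using NA unfolding cl_def by auto
    then have "card N = card (\<Union>i\<in>A. N \<inter> cl V f i)" by simp
    also have "\<dots> = (\<Sum>i\<in>A. card (N \<inter> cl V f i))"
      using finA finN by (intro card_UN_disjoint) (auto simp: cl_def)
    finally show ?thesis .
  qed
  define Z where "Z i = {z\<in>cl V f i. N \<inter> cl V f i = {z}}" for i
  have cS: "card {z\<in>V. f z \<in> T \<and> N \<inter> cl V f (f z) = {z}} = (\<Sum>i\<in>T. card (Z i))"
  proof -
    have "{z\<in>V. f z \<in> T \<and> N \<inter> cl V f (f z) = {z}} = (\<Union>i\<in>T. Z i)" unfolding Z_def cl_def by auto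
    moreover have "card (\<Union>i\<in>T. Z i) = (\<Sum>i\<in>T. card (Z i))"
      using finA TA finV by (intro card_UN_disjoint) (auto simp: Z_def cl_def intro: finite_subset)
    ultimately show ?thesis by simp
  qed
  have t1: "1 \<le> card (N \<inter> cl V f i)" if "i \<in> A" for i
    using cov that finN by (simp add: Suc_le_eq card_gt_0_iff)
  have t2: "2 \<le> card (N \<inter> cl V f i) + card (Z i)" if "i \<in> A" for i
  proof (cases "card (N \<inter> cl V f i) = 1")
    case True
    then obtain z0 where z0: "N \<inter> cl V f i = {z0}" by (meson card_1_singletonE)
    then have "Z i = {z0}" unfolding Z_def by auto
    then show ?thesis using True by simp
  next
    case False
    then show ?thesis using t1[OF that] by simp
  qed
  have finT: "finite T" using TA finA finite_subset by blast
  have "card A = card (A - T) + card T" using TA finA finT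
    by (metis card_Diff_subset card_mono le_add_diff_inverse2)
  then have "card A + card T = (\<Sum>i\<in>A - T. 1) + (\<Sum>i\<in>T. 2)" by simp
  also have "\<dots> \<le> (\<Sum>i\<in>A - T. card (N \<inter> cl V f i)) + (\<Sum>i\<in>T. card (N \<inter> cl V f i) + card (Z i))"
    using t1 t2 TA by (intro add_mono sum_mono) auto
  also have "\<dots> = (\<Sum>i\<in>A. card (N \<inter> cl V f i)) + (\<Sum>i\<in>T. card (Z i))"
  proof -
    have "(\<Sum>i\<in>A. card (N \<inter> cl V f i)) = (\<Sum>i\<in>A - T. card (N \<inter> cl V f i)) + (\<Sum>i\<in>T. card (N \<inter> cl V f i))"
      using TA finA by (metis sum.subset_diff)
    then show ?thesis by (simp add: sum.distrib)
  qed
  finally show ?thesis using cN cS by simp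
qed

lemma free_color:
  fixes g :: "'a \<Rightarrow> nat"
  assumes "finite N" "card N < b"
  shows "\<exists>c<b. \<forall>u\<in>N. g u \<noteq> c"
proof -
  have "card (g ` N) < b" using assms card_image_le le_less_trans by blast
  then have "\<not> {..<b} \<subseteq> g ` N" using card_mono[of "g ` N" "{..<b}"] assms(1) by (metis card_lessThan finite_imageI leD)
  then show ?thesis by auto
qed


definition eqc :: "'a set \<Rightarrow> ('a \<Rightarrow> 'a \<Rightarrow> bool) \<Rightarrow> nat \<Rightarrow> nat \<Rightarrow> ('a \<Rightarrow> nat) \<Rightarrow> bool" where
  "eqc V E s m g \<longleftrightarrow> (\<forall>v\<in>V. g v < s) \<and> proper E g \<and> (\<forall>i<s. card (cl V g i) = m)"

lemma succ_rs_set: "successively (rs R S) (x # xs) \<Longrightarrow> set xs \<subseteq> S"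
proof (induction xs arbitrary: x)
  case Nil then show ?case by simp
next
  case (Cons y ys)
  then have "rs R S x y" "successively (rs R S) (y # ys)" by auto
  then show ?case using Cons.IH unfolding rs_def by auto
qed

lemma free_color2:
  assumes "finite Bc" "finite N" "card N < card Bc"
  shows "\<exists>c\<in>Bc. \<forall>u\<in>N. h u \<noteq> c"
proof -
  have "card (h ` N) < card Bc" using assms card_image_le le_less_trans by blast
  then have "\<not> Bc \<subseteq> h ` N" using card_mono[of "h ` N" Bc] assms(2) by (meson finite_imageI leD)
  then obtain c where "c \<in> Bc" "c \<notin> h ` N" by blast
  then show ?thesis by (metis imageI)
qed

locale hsctx =
  fixes V :: "'a set" and E :: "'a \<Rightarrow> 'a \<Rightarrow> bool" and s m :: nat
  assumes sg: "simple_graph V E"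
    and deg: "\<forall>v\<in>V. degree V E v < s"
    and IHV: "\<forall>V'. V' \<subset> V \<longrightarrow> (\<forall>(E'::'a \<Rightarrow> 'a \<Rightarrow> bool) s' m'. simple_graph V' E' \<and> (\<forall>v\<in>V'. degree V' E' v < s')
                  \<and> card V' = s' * m' \<longrightarrow> (\<exists>g. eqc V' E' s' m' g))"
begin

lemma finV: "finite V" using sg unfolding simple_graph_def by auto
lemma EV: "E u v \<Longrightarrow> u \<in> V \<and> v \<in> V" using sg unfolding simple_graph_def by auto
lemma Esym: "E u v \<Longrightarrow> E v u" using sg unfolding simple_graph_def by auto
lemma Eirr: "\<not> E v v" using sg unfolding simple_graph_def by auto

definition ne :: "('a \<Rightarrow> nat) \<Rightarrow> nat \<Rightarrow> nat \<Rightarrow> bool" where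
  "ne f lo hi \<longleftrightarrow> (\<forall>v\<in>V. f v < s) \<and> proper E f \<and> lo < s \<and> hi < s \<and> lo \<noteq> hi
     \<and> card (cl V f lo) + 1 = m \<and> card (cl V f hi) = m + 1
     \<and> (\<forall>i<s. i \<noteq> lo \<longrightarrow> i \<noteq> hi \<longrightarrow> card (cl V f i) = m)"

definition Acc :: "('a \<Rightarrow> nat) \<Rightarrow> nat \<Rightarrow> nat set" where
  "Acc f lo = {i. i < s \<and> (rs (arc V E f) {..<s})\<^sup>*\<^sup>* i lo}"

lemma finite_cl: "finite (cl V f i)" using finV unfolding cl_def by auto

lemma card_colors:
  assumes "\<forall>v\<in>V. f v < s" "X \<subseteq> {..<s}"
  shows "card {v\<in>V. f v \<in> X} = (\<Sum>i\<in>X. card (cl V f i))"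
proof -
  have fX: "finite X" using assms(2) finite_subset by blast
  have "{v\<in>V. f v \<in> X} = (\<Union>i\<in>X. cl V f i)" unfolding cl_def by auto
  moreover have "card (\<Union>i\<in>X. cl V f i) = (\<Sum>i\<in>X. card (cl V f i))"
    using fX finite_cl by (intro card_UN_disjoint) (auto simp: cl_def)
  ultimately show ?thesis by simp
qed

lemma ne_sum:
  assumes "ne f lo hi" "X \<subseteq> {..<s}"
  shows "card {v\<in>V. f v \<in> X} + (if lo \<in> X then 1 else 0) = card X * m + (if hi \<in> X then 1 else 0)"
proof -
  have fX: "finite X" using assms(2) finite_subset by blast
  have r: "\<forall>v\<in>V. f v < s" using assms(1) unfolding ne_def by auto
  have each: "card (cl V f i) + (if i = lo then 1 else 0) = m + (if i = hi then 1 else 0)" if "i \<in> X" for i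
    using assms that unfolding ne_def by auto
  have "card {v\<in>V. f v \<in> X} + (if lo \<in> X then 1 else 0)
        = (\<Sum>i\<in>X. card (cl V f i)) + (\<Sum>i\<in>X. (if i = lo then 1 else 0))"
    using card_colors[OF r assms(2)] fX by (simp add: sum.delta)
  also have "\<dots> = (\<Sum>i\<in>X. card (cl V f i) + (if i = lo then 1 else 0))" by (simp add: sum.distrib)
  also have "\<dots> = (\<Sum>i\<in>X. m + (if i = hi then 1 else 0))" using each by (intro sum.cong) auto
  also have "\<dots> = card X * m + (if hi \<in> X then 1 else 0)" using fX by (simp add: sum.distrib sum.delta)
  finally show ?thesis .
qed

lemma nbr_count:
  assumes "\<forall>v\<in>V. f v < s" "X \<subseteq> {..<s}"
  shows "card {i\<in>X. \<not> mov V E f z i} \<le> card {u\<in>V. E z u \<and> f u \<in> X}"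
proof -
  have fX: "finite X" using assms(2) finite_subset by blast
  have "{u\<in>V. E z u \<and> f u \<in> X} = (\<Union>i\<in>X. {u\<in>cl V f i. E z u})" unfolding cl_def by auto
  moreover have "card (\<Union>i\<in>X. {u\<in>cl V f i. E z u}) = (\<Sum>i\<in>X. card {u\<in>cl V f i. E z u})"
  proof (rule card_UN_disjoint[OF fX])
    show "\<forall>i\<in>X. finite {u\<in>cl V f i. E z u}" using finite_cl by auto
    show "\<forall>i\<in>X. \<forall>j\<in>X. i \<noteq> j \<longrightarrow> {u\<in>cl V f i. E z u} \<inter> {u\<in>cl V f j. E z u} = {}"
      unfolding cl_def by auto
  qed
  moreover have "(\<Sum>i\<in>X. card {u\<in>cl V f i. E z u}) \<ge> (\<Sum>i\<in>X. if \<not> mov V E f z i then 1 else 0)"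
  proof (rule sum_mono)
    fix i assume "i \<in> X"
    show "(if \<not> mov V E f z i then 1 else 0) \<le> card {u\<in>cl V f i. E z u}"
    proof (cases "mov V E f z i")
      case False
      then have "{u\<in>cl V f i. E z u} \<noteq> {}" unfolding mov_def by auto
      then have "card {u\<in>cl V f i. E z u} \<ge> 1" using finite_cl by (simp add: Suc_le_eq card_gt_0_iff)
      then show ?thesis using False by simp
    qed simp
  qed
  moreover have "(\<Sum>i\<in>X. if \<not> mov V E f z i then 1 else 0) = card {i\<in>X. \<not> mov V E f z i}"
    using fX by (simp flip: sum.inter_filter)
  ultimately show ?thesis by simp
qed

lemma deg_split:
  assumes "\<forall>v\<in>V. f v < s" "X \<subseteq> {..<s}" "z \<in> V"
  shows "card {u\<in>V. E z u \<and> f u \<in> X} + card {u\<in>V. E z u \<and> f u \<notin> X} < s"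
proof -
  have "{u\<in>V. E z u} = {u\<in>V. E z u \<and> f u \<in> X} \<union> {u\<in>V. E z u \<and> f u \<notin> X}" by auto
  moreover have "card ({u\<in>V. E z u \<and> f u \<in> X} \<union> {u\<in>V. E z u \<and> f u \<notin> X})
     = card {u\<in>V. E z u \<and> f u \<in> X} + card {u\<in>V. E z u \<and> f u \<notin> X}"
    using finV by (intro card_Un_disjoint) auto
  moreover have "card {u\<in>V. E z u} < s" using deg assms(3) unfolding degree_def by auto
  ultimately show ?thesis by simp
qed

lemma recolor:
  assumes "V' \<subset> V" "finite Bc" "card V' = card Bc * m" "\<forall>v\<in>V'. card {u\<in>V'. E v u} < card Bc"
  shows "\<exists>h. (\<forall>v\<in>V'. h v \<in> Bc) \<and> (\<forall>u\<in>V'. \<forall>v\<in>V'. E u v \<longrightarrow> h u \<noteq> h v)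
            \<and> (\<forall>c\<in>Bc. card {v\<in>V'. h v = c} = m)"
proof -
  define E' where "E' u v \<longleftrightarrow> E u v \<and> u \<in> V' \<and> v \<in> V'" for u v
  have sg': "simple_graph V' E'" unfolding simple_graph_def E'_def
    using assms(1) finV Esym Eirr finite_subset by blast
  have dg': "\<forall>v\<in>V'. degree V' E' v < card Bc"
  proof
    fix v assume v: "v \<in> V'"
    have "{u\<in>V'. E' v u} = {u\<in>V'. E v u}" unfolding E'_def using v by auto
    then show "degree V' E' v < card Bc" unfolding degree_def using assms(4) v by simp
  qed
  have "simple_graph V' E' \<and> (\<forall>v\<in>V'. degree V' E' v < card Bc) \<and> card V' = card Bc * m"
    using sg' dg' assms(3) by blast
  then obtain g where g: "eqc V' E' (card Bc) m g" using IHV[rule_format, OF assms(1), of E' "card Bc" m] by blast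
  obtain \<phi> where phi: "bij_betw \<phi> {0..<card Bc} Bc" using ex_bij_betw_nat_finite[OF assms(2)] by blast
  define h where "h v = \<phi> (g v)" for v
  show ?thesis
  proof (intro exI[of _ h] conjI ballI impI)
    fix v assume "v \<in> V'"
    then have "g v < card Bc" using g unfolding eqc_def by auto
    then show "h v \<in> Bc" unfolding h_def using phi bij_betwE by fastforce
  next
    fix u v assume uv: "u \<in> V'" "v \<in> V'" "E u v"
    then have "g u \<noteq> g v" using g unfolding eqc_def proper_def E'_def by auto
    moreover have "g u \<in> {0..<card Bc}" "g v \<in> {0..<card Bc}" using g uv unfolding eqc_def by auto
    ultimately show "h u \<noteq> h v" unfolding h_def using phi unfolding bij_betw_def inj_on_def by blast
  next
    fix c assume c: "c \<in> Bc"
    then obtain i where i: "i \<in> {0..<card Bc}" "\<phi> i = c" using phi unfolding bij_betw_def by (metis imageE)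
    have "{v\<in>V'. h v = c} = {v\<in>V'. g v = i}"
    proof -
      have "h v = c \<longleftrightarrow> g v = i" if "v \<in> V'" for v
      proof -
        have "g v \<in> {0..<card Bc}" using g that unfolding eqc_def by auto
        then show ?thesis unfolding h_def using i phi unfolding bij_betw_def inj_on_def by blast
      qed
      then show ?thesis by auto
    qed
    also have "\<dots> = cl V' g i" unfolding cl_def by simp
    finally show "card {v\<in>V'. h v = c} = m" using g i unfolding eqc_def by auto
  qed
qed

lemma assemble:
  assumes pr: "proper E f2" and rg: "\<forall>v\<in>V. f2 v < s" and As: "A \<subseteq> {..<s}"
    and cA: "\<forall>i\<in>A. card (cl V f2 i) = m"
    and V': "V' = {v\<in>V. f2 v \<notin> A}" "V' \<noteq> V"
    and cV': "card V' = card ({..<s} - A) * m"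
    and dV': "\<forall>v\<in>V'. card {u\<in>V'. E v u} < card ({..<s} - A)"
  shows "\<exists>g. eqc V E s m g"
proof -
  have sub: "V' \<subset> V" using V' by auto
  obtain h where h: "\<forall>v\<in>V'. h v \<in> {..<s} - A" "\<forall>u\<in>V'. \<forall>v\<in>V'. E u v \<longrightarrow> h u \<noteq> h v"
    "\<forall>c\<in>{..<s} - A. card {v\<in>V'. h v = c} = m"
    using recolor[OF sub _ cV' dV'] by blast
  define g where "g v = (if f2 v \<in> A then f2 v else h v)" for v
  show ?thesis unfolding eqc_def
  proof (intro exI[of _ g] conjI ballI allI impI)
    fix v assume v: "v \<in> V"
    show "g v < s"
    proof (cases "f2 v \<in> A")
      case True then show ?thesis using rg v unfolding g_def by auto
    next
      case False then have "v \<in> V'" using V' v by auto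
      then show ?thesis using h(1) False unfolding g_def by auto
    qed
  next
    show "proper E g" unfolding proper_def
    proof (intro allI impI)
      fix u v assume e: "E u v"
      have uv: "u \<in> V" "v \<in> V" using EV[OF e] by auto
      show "g u \<noteq> g v"
      proof (cases "f2 u \<in> A"; cases "f2 v \<in> A")
        assume "f2 u \<in> A" "f2 v \<in> A"
        then show ?thesis using pr e unfolding proper_def g_def by auto
      next
        assume a: "f2 u \<in> A" "f2 v \<notin> A"
        then have "v \<in> V'" using V' uv by auto
        then show ?thesis using a h(1) unfolding g_def by auto
      next
        assume a: "f2 u \<notin> A" "f2 v \<in> A"
        then have "u \<in> V'" using V' uv by auto
        then show ?thesis using a h(1) unfolding g_def by auto
      next
        assume a: "f2 u \<notin> A" "f2 v \<notin> A"
        then have "u \<in> V'" "v \<in> V'" using V' uv by auto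
        then show ?thesis using a h(2) e unfolding g_def by auto
      qed
    qed
  next
    fix i assume i: "i < s"
    show "card (cl V g i) = m"
    proof (cases "i \<in> A")
      case True
      have "cl V g i = cl V f2 i"
        unfolding cl_def g_def using True h(1) V' by auto
      then show ?thesis using cA True by simp
    next
      case False
      have "cl V g i = {v\<in>V'. h v = i}"
        unfolding cl_def g_def using False V' by auto
      then show ?thesis using h(3) False i by auto
    qed
  qed
qed

lemma acc_lo: "lo < s \<Longrightarrow> lo \<in> Acc f lo" unfolding Acc_def by auto

lemma shift_equit:
  assumes "ne f lo hi" "hi \<in> Acc f lo"
  shows "\<exists>g. eqc V E s m g"
proof -
  have r: "(rs (arc V E f) {..<s})\<^sup>*\<^sup>* hi lo" using assms(2) unfolding Acc_def by auto
  obtain ps where ps: "distinct (hi # ps)" "last (hi # ps) = lo" "successively (rs (arc V E f) {..<s}) (hi # ps)"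
    using rtranclp_distinct_path[OF r] by blast
  have ps': "successively (arc V E f) (hi # ps)"
    using ps(3) by (rule successively_mono) (auto simp: rs_def)
  have pset: "set (hi # ps) \<subseteq> {..<s}"
    using succ_rs_set[OF ps(3)] assms(1) unfolding ne_def by auto
  have pr: "proper E f" using assms(1) unfolding ne_def by auto
  obtain g where g: "proper E g" "\<forall>v. f v \<notin> set (hi # ps) \<longrightarrow> g v = f v"
    "\<forall>v. f v \<in> set (hi # ps) \<longrightarrow> g v \<in> set (hi # ps)"
    "\<forall>i. card (cl V g i) + (if i = hi then 1 else 0) = card (cl V f i) + (if i = last (hi # ps) then 1 else 0)"
    using shift[OF ps' ps(1) pr finV] EV Esym Eirr by blast
  show ?thesis unfolding eqc_def
  proof (intro exI[of _ g] conjI ballI allI impI)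
    fix v assume v: "v \<in> V"
    show "g v < s" using g(2,3) pset assms(1) v unfolding ne_def by (cases "f v \<in> set (hi # ps)") auto
  next
    show "proper E g" by (rule g(1))
  next
    fix i assume i: "i < s"
    show "card (cl V g i) = m" using g(4)[rule_format, of i] ps(2) assms(1) i unfolding ne_def
      by (cases "i = hi"; cases "i = lo") auto
  qed
qed

end


context hsctx begin

lemma Acc_sub: "Acc f lo \<subseteq> {..<s}" unfolding Acc_def by auto

lemma reach_Acc:
  assumes "(rs (arc V E f) {..<s})\<^sup>*\<^sup>* i lo" "lo < s"
  shows "(rs (arc V E f) (Acc f lo))\<^sup>*\<^sup>* i lo"
  using assms(1)
proof (induction rule: converse_rtranclp_induct)
  case base then show ?case by simp
next
  case (step i i')
  have "i' \<in> Acc f lo" using step(1,2) unfolding Acc_def rs_def by auto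
  moreover have "(rs (arc V E f) {..<s})\<^sup>*\<^sup>* i lo" using step(1) step(2) by (rule converse_rtranclp_into_rtranclp)
  then have "i \<in> Acc f lo" using step(1) unfolding Acc_def rs_def by auto
  ultimately have "rs (arc V E f) (Acc f lo) i i'" using step(1) unfolding rs_def by auto
  then show ?case using step(3) by (meson converse_rtranclp_into_rtranclp)
qed

lemma not_mov_B:
  assumes "ne f lo hi" "y \<in> V" "f y \<notin> Acc f lo" "X \<in> Acc f lo"
  shows "\<not> mov V E f y X"
proof
  assume mv: "mov V E f y X"
  have fy: "f y < s" using assms(1,2) unfolding ne_def by auto
  have X: "X < s" "(rs (arc V E f) {..<s})\<^sup>*\<^sup>* X lo" using assms(4) unfolding Acc_def by auto
  have "f y \<noteq> X" using assms(3,4) by auto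
  moreover have "y \<in> cl V f (f y)" using assms(2) unfolding cl_def by auto
  ultimately have "arc V E f (f y) X" using mv unfolding arc_def by auto
  then have "rs (arc V E f) {..<s} (f y) X" using fy X unfolding rs_def by auto
  then have "(rs (arc V E f) {..<s})\<^sup>*\<^sup>* (f y) lo" using X(2) by (meson converse_rtranclp_into_rtranclp)
  then show False using assms(3) fy unfolding Acc_def by auto
qed

lemma B_size:
  assumes "ne f lo hi" "hi \<notin> Acc f lo"
  shows "card {v\<in>V. f v \<notin> Acc f lo} = card ({..<s} - Acc f lo) * m + 1"
proof -
  have lo: "lo \<in> Acc f lo" using assms(1) acc_lo unfolding ne_def by auto
  have hi: "hi < s" using assms(1) unfolding ne_def by auto
  have "{v\<in>V. f v \<notin> Acc f lo} = {v\<in>V. f v \<in> {..<s} - Acc f lo}" using assms(1) unfolding ne_def by auto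
  then show ?thesis using ne_sum[OF assms(1), of "{..<s} - Acc f lo"] lo hi assms(2) by auto
qed

lemma B_deg:
  assumes "ne f lo hi" "v \<in> V" "f v \<notin> Acc f lo"
  shows "card {u\<in>V. E v u \<and> f u \<notin> Acc f lo} < card ({..<s} - Acc f lo)"
proof -
  have rg: "\<forall>v\<in>V. f v < s" using assms(1) unfolding ne_def by auto
  have "{i\<in>Acc f lo. \<not> mov V E f v i} = Acc f lo" using not_mov_B[OF assms] by auto
  then have "card {i\<in>Acc f lo. \<not> mov V E f v i} = card (Acc f lo)" by simp
  then have "card (Acc f lo) \<le> card {u\<in>V. E v u \<and> f u \<in> Acc f lo}"
    using nbr_count[OF rg Acc_sub, of f lo v] by simp
  moreover have "card {u\<in>V. E v u \<and> f u \<in> Acc f lo} + card {u\<in>V. E v u \<and> f u \<notin> Acc f lo} < s"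
    using deg_split[OF rg Acc_sub assms(2)] by simp
  moreover have "card ({..<s} - Acc f lo) = s - card (Acc f lo)"
  proof -
    have fin: "finite (Acc f lo)" using Acc_sub[of f lo] finite_subset by blast
    show ?thesis using card_Diff_subset[OF fin Acc_sub] by simp
  qed
  ultimately show ?thesis by simp
qed

lemma term_ne_lo:
  assumes "\<forall>U \<in> A - {W}. (rs (arc V E f) (A - {W}))\<^sup>*\<^sup>* U lo" "X \<in> A" "X \<noteq> W"
  shows "W \<noteq> lo"
proof
  assume "W = lo"
  then have "(rs (arc V E f) (A - {lo}))\<^sup>*\<^sup>* X lo" using assms by auto
  then have "X = lo" using rs_notin by fastforce
  then show False using assms(3) \<open>W = lo\<close> by simp
qed

lemma M1:
  assumes ne: "ne f lo hi" and A: "A = Acc f lo" and hiA: "hi \<notin> A"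
    and W: "W \<in> A" and tm: "\<forall>U \<in> A - {W}. (rs (arc V E f) (A - {W}))\<^sup>*\<^sup>* U lo"
    and z: "z \<in> cl V f W" and y: "y \<in> V" "f y \<notin> A" "{u \<in> cl V f W. E y u} = {z}"
    and X: "X \<in> A" "X \<noteq> W" "mov V E f z X"
  shows "\<exists>g. eqc V E s m g"
proof -
  have rg: "\<forall>v\<in>V. f v < s" and pr: "proper E f" using ne unfolding ne_def by auto
  have As: "A \<subseteq> {..<s}" using A Acc_sub by simp
  have zV: "z \<in> V" "f z = W" using z unfolding cl_def by auto
  have yz: "y \<noteq> z" using zV y(2) W by auto
  have Wlo: "W \<noteq> lo" using term_ne_lo[OF tm X(1,2)] .
  have fyW: "f y \<noteq> W" "f y \<noteq> X" using y(2) W X(1) by auto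
  define f1 where "f1 = f(z := X, y := W)"
  have p0: "proper E (f(z := X))" using proper_upd[OF pr X(3)] EV Esym Eirr by blast
  have m0: "mov V E (f(z := X)) y W"
    unfolding mov_def
  proof
    fix u assume u: "u \<in> cl V (f(z := X)) W"
    show "\<not> E y u"
    proof (cases "u = z")
      case True then show ?thesis using u X(2) unfolding cl_def by auto
    next
      case False
      then have "u \<in> cl V f W" using u unfolding cl_def by auto
      then show ?thesis using y(3) False by auto
    qed
  qed
  have pr1: "proper E f1" unfolding f1_def using proper_upd[OF p0 m0] EV Esym Eirr by blast
  have cl1: "cl V f1 i = (if i = W then insert y (cl V f W - {z}) else if i = X then insert z (cl V f X)
                else if i = f y then cl V f i - {y} else cl V f i)" for i
    unfolding f1_def cl_def using zV y(1) yz X(2) fyW by auto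
  have path0: "(rs (arc V E f) (A - {W}))\<^sup>*\<^sup>* X lo" using tm X by auto
  obtain ps where ps: "distinct (X # ps)" "last (X # ps) = lo" "successively (rs (arc V E f) (A - {W})) (X # ps)"
    using rtranclp_distinct_path[OF path0] by blast
  have psA: "set ps \<subseteq> A - {W}" using succ_rs_set[OF ps(3)] .
  have pathA: "set (X # ps) \<subseteq> A - {W}" using psA X by auto
  have ps1: "successively (arc V E f) (X # ps)" using ps(3) by (rule successively_mono) (auto simp: rs_def)
  have ps2: "successively (arc V E f1) (X # ps)"
  proof (rule path_transfer[OF ps1])
    fix i assume i: "i \<in> set ps"
    then have "i \<in> A - {W}" "i \<noteq> X" using psA ps(1) by auto
    moreover have "i \<noteq> f y" using \<open>i \<in> A - {W}\<close> y(2) by auto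
    ultimately show "cl V f1 i = cl V f i" using cl1[of i] by auto
  next
    show "cl V f X \<subseteq> cl V f1 X" using cl1[of X] X(2) by auto
  qed
  obtain f2 where f2: "proper E f2" "\<forall>v. f1 v \<notin> set (X # ps) \<longrightarrow> f2 v = f1 v"
    "\<forall>v. f1 v \<in> set (X # ps) \<longrightarrow> f2 v \<in> set (X # ps)"
    "\<forall>i. card (cl V f2 i) + (if i = X then 1 else 0) = card (cl V f1 i) + (if i = last (X # ps) then 1 else 0)"
    using shift[OF ps2 ps(1) pr1 finV] EV Esym Eirr by blast
  have f1A: "f1 v \<in> A \<longleftrightarrow> f v \<in> A \<or> v = y" for v
    unfolding f1_def using zV X(1) W by auto
  have f2A: "f2 v \<in> A \<longleftrightarrow> f1 v \<in> A" for v
    using f2(2,3) pathA by (cases "f1 v \<in> set (X # ps)") auto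
  show ?thesis
  proof (rule assemble[OF f2(1) _ As])
    show "\<forall>v\<in>V. f2 v < s"
    proof
      fix v assume v: "v \<in> V"
      show "f2 v < s"
      proof (cases "f1 v \<in> set (X # ps)")
        case True
        then have "f2 v \<in> set (X # ps)" using f2(3) by blast
        then show ?thesis using pathA As by auto
      next
        case False
        have "f1 v < s" unfolding f1_def using rg v X(1) W As by auto
        then show ?thesis using f2(2) False by auto
      qed
    qed
  next
    show "\<forall>i\<in>A. card (cl V f2 i) = m"
    proof
      fix i assume iA: "i \<in> A"
      have e: "card (cl V f2 i) + (if i = X then 1 else 0) = card (cl V f1 i) + (if i = lo then 1 else 0)"
        using f2(4) ps(2) by auto
      have ihi: "i \<noteq> hi" using iA hiA by auto
      have iS: "i < s" using iA As by auto
      have cf: "card (cl V f i) + (if i = lo then 1 else 0) = m" using ne ihi iS unfolding ne_def by auto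
      show "card (cl V f2 i) = m"
      proof (cases "i = W")
        case True
        have "card (cl V f1 i) = card (cl V f W)"
        proof -
          have "y \<notin> cl V f W" using fyW unfolding cl_def by auto
          moreover have "card (cl V f W) > 0" using z finite_cl[of f W] card_gt_0_iff by blast
          ultimately have "card (insert y (cl V f W - {z})) = card (cl V f W)"
            using z finite_cl by (simp add: card_Suc_Diff1)
          then show ?thesis using cl1[of i] True by simp
        qed
        then show ?thesis using e cf True X(2) Wlo by auto
      next
        case False
        have "card (cl V f1 i) = card (cl V f i) + (if i = X then 1 else 0)"
        proof (cases "i = X")
          case True
          have "z \<notin> cl V f X" using zV X(2) unfolding cl_def by auto
          then show ?thesis using cl1[of i] True False finite_cl by simp
        next
          case F2: False
          have "i \<noteq> f y" using iA y(2) by auto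
          then show ?thesis using cl1[of i] False F2 by simp
        qed
        then show ?thesis using e cf by simp
      qed
    qed
  next
    show "{v\<in>V. f v \<notin> A} - {y} = {v\<in>V. f2 v \<notin> A}" using f2A f1A by auto
  next
    show "{v\<in>V. f v \<notin> A} - {y} \<noteq> V" using y(1) by auto
  next
    have "card {v\<in>V. f v \<notin> A} = card ({..<s} - A) * m + 1" using B_size[OF ne] hiA A by simp
    moreover have "y \<in> {v\<in>V. f v \<notin> A}" using y by auto
    ultimately show "card ({v\<in>V. f v \<notin> A} - {y}) = card ({..<s} - A) * m"
      using finV by (simp add: card_Diff_singleton)
  next
    show "\<forall>v\<in>{v\<in>V. f v \<notin> A} - {y}. card {u\<in>{v\<in>V. f v \<notin> A} - {y}. E v u} < card ({..<s} - A)"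
    proof
      fix v assume v: "v \<in> {v\<in>V. f v \<notin> A} - {y}"
      have "card {u\<in>{v\<in>V. f v \<notin> A} - {y}. E v u} \<le> card {u\<in>V. E v u \<and> f u \<notin> A}"
        using finV by (intro card_mono) auto
      also have "\<dots> < card ({..<s} - A)" using B_deg[OF ne, of v] v A by auto
      finally show "card {u\<in>{v\<in>V. f v \<notin> A} - {y}. E v u} < card ({..<s} - A)" .
    qed
  qed
qed

end


context hsctx begin

lemma reach_transfer:
  assumes "(rs (arc V E f) S)\<^sup>*\<^sup>* U t" "\<forall>i\<in>S. cl V f' i = cl V f i"
  shows "(rs (arc V E f') S)\<^sup>*\<^sup>* U t"
  using assms(1)
proof (induction rule: rtranclp_induct)
  case base then show ?case by simp
next
  case (step p q)
  then have "p \<in> S" "q \<in> S" "arc V E f p q" unfolding rs_def by auto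
  then have "arc V E f' p q" using arc_transfer[of V E f p q f'] assms(2) by auto
  then have "rs (arc V E f') S p q" using \<open>p \<in> S\<close> \<open>q \<in> S\<close> unfolding rs_def by auto
  then show ?case using step(3) by (meson rtranclp.rtrancl_into_rtrancl)
qed

lemma M2:
  assumes ne: "ne f lo hi" and A: "A = Acc f lo" and hiA: "hi \<notin> A"
    and W: "W \<in> A" and tm: "\<forall>U \<in> A - {W}. (rs (arc V E f) (A - {W}))\<^sup>*\<^sup>* U lo"
    and z: "z \<in> cl V f W" and y: "y \<in> V" "f y \<notin> A" "{u \<in> cl V f W. E y u} = {z}"
    and nm: "\<forall>X \<in> A - {W}. \<not> mov V E f z X"
    and v0: "v0 \<in> V" "f v0 \<notin> A" "v0 \<noteq> y" "{u \<in> cl V f W. E v0 u} = {z}" "\<not> E v0 y"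
  shows "\<exists>f' hi'. ne f' lo hi' \<and> card ({..<s} - Acc f' lo) < card ({..<s} - Acc f lo)"
proof -
  have rg: "\<forall>v\<in>V. f v < s" and pr: "proper E f" and los: "lo < s" using ne unfolding ne_def by auto
  have As: "A \<subseteq> {..<s}" using A Acc_sub by simp
  have finA: "finite A" using As finite_subset by blast
  have loA: "lo \<in> A" using A acc_lo los by simp
  define Bc where "Bc = {..<s} - A"
  have finBc: "finite Bc" unfolding Bc_def by simp
  have cBc: "card Bc = s - card A" unfolding Bc_def using card_Diff_subset[OF finA As] by simp
  have aa: "card A \<le> s" using card_mono[OF _ As] by simp
  have zV: "z \<in> V" "f z = W" using z unfolding cl_def by auto
  have yz: "y \<noteq> z" using zV y(2) W by auto
  have Eyz: "E y z" "E z y" using y(3) Esym by auto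
  define B where "B = {v\<in>V. f v \<notin> A}"
  define V' where "V' = B - {y}"
  have yB: "y \<in> B" using y unfolding B_def by auto
  have cB: "card B = card Bc * m + 1" using B_size[OF ne] hiA A unfolding B_def Bc_def by simp
  have cV': "card V' = card Bc * m" unfolding V'_def using cB yB finV B_def by (simp add: card_Diff_singleton)
  have V'sub: "V' \<subset> V" unfolding V'_def B_def using y by auto
  have dV': "\<forall>v\<in>V'. card {u\<in>V'. E v u} < card Bc"
  proof
    fix v assume v: "v \<in> V'"
    have "card {u\<in>V'. E v u} \<le> card {u\<in>V. E v u \<and> f u \<notin> A}"
      using finV unfolding V'_def B_def by (intro card_mono) auto
    also have "\<dots> < card Bc" using B_deg[OF ne, of v] v A unfolding V'_def B_def Bc_def by auto
    finally show "card {u\<in>V'. E v u} < card Bc" .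
  qed
  obtain h where h: "\<forall>v\<in>V'. h v \<in> Bc" "\<forall>u\<in>V'. \<forall>v\<in>V'. E u v \<longrightarrow> h u \<noteq> h v"
    "\<forall>c\<in>Bc. card {v\<in>V'. h v = c} = m"
    using recolor[OF V'sub finBc cV' dV'] by blast
  have dBz: "card {u\<in>V. E z u \<and> f u \<notin> A} \<le> card Bc"
  proof -
    have "{i\<in>A - {W}. \<not> mov V E f z i} = A - {W}" using nm by auto
    then have "card (A - {W}) \<le> card {u\<in>V. E z u \<and> f u \<in> A - {W}}"
      using nbr_count[OF rg, of "A - {W}" z] As by auto
    also have "\<dots> \<le> card {u\<in>V. E z u \<and> f u \<in> A}" using finV by (intro card_mono) auto
    finally have c1: "card A - 1 \<le> card {u\<in>V. E z u \<and> f u \<in> A}" using W finA by (simp add: card_Diff_singleton)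
    have "card {u\<in>V. E z u \<and> f u \<in> A} + card {u\<in>V. E z u \<and> f u \<notin> A} < s"
      using deg_split[OF rg As zV(1)] .
    moreover have "card A \<ge> 1" using W finA by (metis One_nat_def Suc_leI card_gt_0_iff empty_iff)
    ultimately show ?thesis using c1 cBc aa by linarith
  qed
  have NzV': "card {u\<in>V'. E z u} < card Bc"
  proof -
    have sub: "{u\<in>V'. E z u} \<subseteq> {u\<in>V. E z u \<and> f u \<notin> A} - {y}" unfolding V'_def B_def by auto
    have yin: "y \<in> {u\<in>V. E z u \<and> f u \<notin> A}" using y Eyz by auto
    have fin: "finite {u\<in>V. E z u \<and> f u \<notin> A}" using finV by auto
    have "card {u\<in>V'. E z u} \<le> card ({u\<in>V. E z u \<and> f u \<notin> A} - {y})" using sub fin by (intro card_mono) auto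
    also have "\<dots> = card {u\<in>V. E z u \<and> f u \<notin> A} - 1" using yin fin by (simp add: card_Diff_singleton)
    also have "\<dots> < card Bc"
    proof -
      have "card {u\<in>V. E z u \<and> f u \<notin> A} > 0" using yin fin card_gt_0_iff by blast
      then show ?thesis using dBz by linarith
    qed
    finally show ?thesis .
  qed
  obtain c where c: "c \<in> Bc" "\<forall>u\<in>{u\<in>V'. E z u}. h u \<noteq> c"
    using free_color2[OF finBc _ NzV', of h] finV unfolding V'_def B_def by auto
  define f' where "f' v = (if v \<in> V' then h v else if v = z then c else if v = y then W else f v)" for v
  have zV': "z \<notin> V'" "y \<notin> V'" unfolding V'_def B_def using zV W by auto
  have f'z: "f' z = c" unfolding f'_def using zV' by simp
  have f'y: "f' y = W" unfolding f'_def using zV' yz by simp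
  have f'o: "f' v = f v" if "v \<in> V" "v \<notin> V'" "v \<noteq> z" "v \<noteq> y" for v unfolding f'_def using that by simp
  have oA: "f v \<in> A" if "v \<in> V" "v \<notin> V'" "v \<noteq> y" for v using that unfolding V'_def B_def by auto
  have BcA: "Bc \<inter> A = {}" unfolding Bc_def by auto
  have clA: "cl V f' i = cl V f i" if "i \<in> A" "i \<noteq> W" for i
  proof -
    have "f' v = i \<longleftrightarrow> f v = i" if v: "v \<in> V" for v
    proof (cases "v \<in> V'")
      case True
      then have "f' v \<in> Bc" "f v \<notin> A" using h(1) unfolding f'_def V'_def B_def by auto
      then show ?thesis using \<open>i \<in> A\<close> BcA by auto
    next
      case False
      show ?thesis
      proof (cases "v = z")
        case True then show ?thesis using f'z c(1) BcA \<open>i \<in> A\<close> zV \<open>i \<noteq> W\<close> by auto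
      next
        case F2: False
        show ?thesis
        proof (cases "v = y")
          case True then show ?thesis using f'y \<open>i \<noteq> W\<close> y(2) \<open>i \<in> A\<close> by auto
        next
          case False then show ?thesis using f'o v \<open>v \<notin> V'\<close> F2 by auto
        qed
      qed
    qed
    then show ?thesis unfolding cl_def by auto
  qed
  have clW: "cl V f' W = insert y (cl V f W - {z})"
  proof -
    have "f' v = W \<longleftrightarrow> (v = y \<or> (f v = W \<and> v \<noteq> z))" if v: "v \<in> V" for v
    proof (cases "v \<in> V'")
      case True
      then have "f' v \<in> Bc" "f v \<notin> A" "v \<noteq> y" using h(1) unfolding f'_def V'_def B_def by auto
      then show ?thesis using W BcA by auto
    next
      case False
      then show ?thesis using f'z f'y f'o[OF v False] c(1) BcA W oA[OF v False] by (cases "v = z"; cases "v = y") auto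
    qed
    then show ?thesis unfolding cl_def using y(1) by auto
  qed
  have clB: "cl V f' i = {v\<in>V'. h v = i} \<union> (if i = c then {z} else {})" if "i \<in> Bc" for i
  proof -
    have "f' v = i \<longleftrightarrow> (v \<in> V' \<and> h v = i) \<or> (i = c \<and> v = z)" if v: "v \<in> V" for v
    proof (cases "v \<in> V'")
      case True then show ?thesis unfolding f'_def using zV' by auto
    next
      case False
      then show ?thesis using f'z f'y f'o[OF v False] \<open>i \<in> Bc\<close> BcA W oA[OF v False] by (cases "v = z"; cases "v = y") auto
    qed
    then show ?thesis unfolding cl_def using zV V'sub by auto
  qed
  have ne': "ne f' lo c" unfolding ne_def
  proof (intro conjI ballI allI impI)
    fix v assume v: "v \<in> V"
    show "f' v < s"
    proof (cases "v \<in> V'")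
      case True then show ?thesis using h(1) unfolding f'_def Bc_def by auto
    next
      case False
      then show ?thesis using f'z f'y f'o[OF v False] c(1) rg v W As unfolding Bc_def by (cases "v = z"; cases "v = y") auto
    qed
  next
    show "proper E f'" unfolding proper_def
    proof (intro allI impI)
      fix u v assume e: "E u v"
      have uv: "u \<in> V" "v \<in> V" using EV[OF e] by auto
      define side where "side x \<longleftrightarrow> x \<in> V' \<or> x = z" for x
      have sideB: "side x \<Longrightarrow> f' x \<in> Bc" for x unfolding side_def using h(1) f'z c(1) unfolding f'_def by auto
      have sideA: "x \<in> V \<Longrightarrow> \<not> side x \<Longrightarrow> f' x \<in> A" for x
        unfolding side_def using f'y f'o oA W by (metis)
      show "f' u \<noteq> f' v"
      proof (cases "side u = side v")
        case False
        show ?thesis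
        proof (cases "side u")
          case True
          then have "f' u \<in> Bc" "f' v \<in> A" using sideA sideB uv False by auto
          then show ?thesis using BcA by auto
        next
          case F: False
          then have "f' v \<in> Bc" "f' u \<in> A" using sideA sideB uv False by auto
          then show ?thesis using BcA by auto
        qed
      next
        case True
        show ?thesis
        proof (cases "side u")
          case True
          then have sv: "side v" using \<open>side u = side v\<close> by simp
          show ?thesis
          proof (cases "u = z")
            case True
            then have "v \<noteq> z" using e Eirr by auto
            then have "v \<in> V'" using sv unfolding side_def by auto
            then show ?thesis using c(2) e True f'z unfolding f'_def using zV' by auto
          next
            case False
            then have uV': "u \<in> V'" using \<open>side u\<close> unfolding side_def by auto
            show ?thesis
            proof (cases "v = z")
              case True
              then show ?thesis using c(2) Esym[OF e] uV' f'z unfolding f'_def by auto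
            next
              case False
              then have "v \<in> V'" using sv unfolding side_def by auto
              then show ?thesis using h(2) uV' e unfolding f'_def by auto
            qed
          qed
        next
          case False
          then have nu: "u \<notin> V'" "u \<noteq> z" and nv: "v \<notin> V'" "v \<noteq> z"
            using \<open>side u = side v\<close> unfolding side_def by auto
          show ?thesis
          proof (cases "u = y")
            case True
            then have "v \<noteq> y" using e Eirr by auto
            then have fv: "f' v = f v" using f'o uv nv by auto
            have "f v \<noteq> W"
            proof
              assume "f v = W"
              then have "v \<in> {u \<in> cl V f W. E y u}" using uv e True unfolding cl_def by auto
              then show False using y(3) nv by auto
            qed
            then show ?thesis using fv True f'y by auto
          next
            case False
            note uy = this
            show ?thesis
            proof (cases "v = y")
              case True
              have fu: "f' u = f u" using f'o uv nu uy by auto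
              have "f u \<noteq> W"
              proof
                assume "f u = W"
                then have "u \<in> {u \<in> cl V f W. E y u}" using uv Esym[OF e] True unfolding cl_def by auto
                then show False using y(3) nu by auto
              qed
              then show ?thesis using fu True f'y by auto
            next
              case False
              then show ?thesis using f'o uv nu nv uy pr e unfolding proper_def by auto
            qed
          qed
        qed
      qed
    qed
  next
    show "lo < s" by (rule los)
  next
    show "c < s" using c(1) unfolding Bc_def by auto
  next
    show "lo \<noteq> c" using c(1) loA BcA by auto
  next
    have "card (cl V f' lo) = card (cl V f lo)"
    proof (cases "lo = W")
      case True
      have "y \<notin> cl V f W" using y(2) W unfolding cl_def by auto
      moreover have "card (cl V f W) > 0" using z finite_cl[of f W] card_gt_0_iff by blast
      ultimately show ?thesis using clW True z finite_cl by (simp add: card_Suc_Diff1)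
    next
      case False then show ?thesis using clA loA by simp
    qed
    then show "card (cl V f' lo) + 1 = m" using ne unfolding ne_def by simp
  next
    have "card (cl V f' c) = card {v\<in>V'. h v = c} + 1"
    proof -
      have "cl V f' c = insert z {v\<in>V'. h v = c}" using clB[OF c(1)] by auto
      moreover have "finite {v\<in>V'. h v = c}"
      proof (rule finite_subset[OF _ finV])
        show "{v\<in>V'. h v = c} \<subseteq> V" using V'sub by auto
      qed
      ultimately show ?thesis using zV' by simp
    qed
    then show "card (cl V f' c) = m + 1" using h(3) c(1) by simp
  next
    fix i assume i: "i < s" "i \<noteq> lo" "i \<noteq> c"
    show "card (cl V f' i) = m"
    proof (cases "i \<in> A")
      case True
      have ihi: "i \<noteq> hi" using True hiA by auto
      have cf: "card (cl V f i) = m" using ne i ihi unfolding ne_def by auto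
      show ?thesis
      proof (cases "i = W")
        case True
        have "y \<notin> cl V f W" using y(2) W unfolding cl_def by auto
        moreover have "card (cl V f W) > 0" using z finite_cl[of f W] card_gt_0_iff by blast
        ultimately show ?thesis using clW True z finite_cl cf by (simp add: card_Suc_Diff1)
      next
        case False then show ?thesis using clA True cf by simp
      qed
    next
      case False
      then have "i \<in> Bc" using i unfolding Bc_def by auto
      then show ?thesis using clB h(3) i(3) by simp
    qed
  qed
  have clA': "\<forall>i\<in>A - {W}. cl V f' i = cl V f i" using clA by auto
  have reachA: "(rs (arc V E f') {..<s})\<^sup>*\<^sup>* U lo" if U: "U \<in> A" for U
  proof (cases "U = W")
    case False
    have "(rs (arc V E f) (A - {W}))\<^sup>*\<^sup>* U lo" using tm U False by auto
    then have h1: "(rs (arc V E f') (A - {W}))\<^sup>*\<^sup>* U lo" using reach_transfer[OF _ clA'] by blast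
    have sub: "A - {W} \<subseteq> {..<s}" using As by auto
    show ?thesis by (rule rs_mono[OF sub h1])
  next
    case True
    show ?thesis
    proof (cases "W = lo")
      case True then show ?thesis using \<open>U = W\<close> by simp
    next
      case False
      have "(rs (arc V E f) {..<s})\<^sup>*\<^sup>* W lo" using W A unfolding Acc_def by auto
      then obtain X1 where X1: "rs (arc V E f) {..<s} W X1" "(rs (arc V E f) {..<s})\<^sup>*\<^sup>* X1 lo"
        using False by (metis converse_rtranclpE)
      have X1A: "X1 \<in> A" using X1 A unfolding Acc_def rs_def by auto
      have X1W: "X1 \<noteq> W" using X1(1) unfolding rs_def arc_def by auto
      obtain w0 where w0: "w0 \<in> cl V f W" "mov V E f w0 X1" using X1(1) unfolding rs_def arc_def by auto
      have "w0 \<noteq> z" using w0(2) nm X1A X1W by auto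
      then have "w0 \<in> cl V f' W" using clW w0(1) by auto
      moreover have "mov V E f' w0 X1" using w0(2) clA[OF X1A X1W] unfolding mov_def by simp
      ultimately have "arc V E f' W X1" using X1W unfolding arc_def by auto
      then have "rs (arc V E f') {..<s} W X1" using X1(1) unfolding rs_def by auto
      moreover have "(rs (arc V E f) (A - {W}))\<^sup>*\<^sup>* X1 lo" using tm X1A X1W by auto
      then have h1: "(rs (arc V E f') (A - {W}))\<^sup>*\<^sup>* X1 lo" using reach_transfer[OF _ clA'] by blast
      have sub: "A - {W} \<subseteq> {..<s}" using As by auto
      have "(rs (arc V E f') {..<s})\<^sup>*\<^sup>* X1 lo" by (rule rs_mono[OF sub h1])
      ultimately show ?thesis using True by (meson converse_rtranclp_into_rtranclp)
    qed
  qed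
  have v0V': "v0 \<in> V'" unfolding V'_def B_def using v0 by auto
  have hv0: "f' v0 = h v0" "h v0 \<in> Bc" using v0V' h(1) unfolding f'_def by auto
  have "mov V E f' v0 W" unfolding mov_def
  proof
    fix u assume "u \<in> cl V f' W"
    then have "u = y \<or> (u \<in> cl V f W \<and> u \<noteq> z)" using clW by auto
    then show "\<not> E v0 u" using v0(4,5) by auto
  qed
  moreover have "v0 \<in> cl V f' (h v0)" using hv0 v0 unfolding cl_def by auto
  moreover have "h v0 \<noteq> W" using hv0 W BcA by auto
  ultimately have "arc V E f' (h v0) W" unfolding arc_def by auto
  then have "rs (arc V E f') {..<s} (h v0) W" using hv0 W As unfolding rs_def Bc_def by auto
  then have "(rs (arc V E f') {..<s})\<^sup>*\<^sup>* (h v0) lo" using reachA[OF W] by (meson converse_rtranclp_into_rtranclp)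
  then have hv0acc: "h v0 \<in> Acc f' lo" using hv0 unfolding Acc_def Bc_def by auto
  have "A \<subseteq> Acc f' lo" using reachA As unfolding Acc_def by auto
  then have "{..<s} - Acc f' lo \<subseteq> Bc - {h v0}" using hv0acc unfolding Bc_def by auto
  then have "card ({..<s} - Acc f' lo) \<le> card (Bc - {h v0})" using finBc by (intro card_mono) auto
  also have "\<dots> < card Bc" by (rule card_Diff1_less[OF finBc hv0(2)])
  finally show ?thesis using ne' A unfolding Bc_def by blast
qed

end


context hsctx begin

lemma dBz_lemma:
  assumes ne: "ne f lo hi" and A: "A = Acc f lo" and W: "W \<in> A" and z: "z \<in> cl V f W"
    and nm: "\<forall>X \<in> A - {W}. \<not> mov V E f z X"
  shows "card {u\<in>V. E z u \<and> f u \<notin> A} \<le> card ({..<s} - A)"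
proof -
  have rg: "\<forall>v\<in>V. f v < s" using ne unfolding ne_def by auto
  have As: "A \<subseteq> {..<s}" using A Acc_sub by simp
  have finA: "finite A" using As finite_subset by blast
  have zV: "z \<in> V" using z unfolding cl_def by auto
  have cBc: "card ({..<s} - A) = s - card A" using card_Diff_subset[OF finA As] by simp
  have aa: "card A \<le> s" using card_mono[OF _ As] by simp
  have "{i\<in>A - {W}. \<not> mov V E f z i} = A - {W}" using nm by auto
  then have "card (A - {W}) \<le> card {u\<in>V. E z u \<and> f u \<in> A - {W}}"
    using nbr_count[OF rg, of "A - {W}" z] As by auto
  also have "\<dots> \<le> card {u\<in>V. E z u \<and> f u \<in> A}" using finV by (intro card_mono) auto
  finally have c1: "card A - 1 \<le> card {u\<in>V. E z u \<and> f u \<in> A}" using W finA by (simp add: card_Diff_singleton)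
  have "card {u\<in>V. E z u \<and> f u \<in> A} + card {u\<in>V. E z u \<and> f u \<notin> A} < s"
    using deg_split[OF rg As zV] .
  moreover have "card A \<ge> 1" using W finA by (metis One_nat_def Suc_leI card_gt_0_iff empty_iff)
  ultimately show ?thesis using c1 cBc aa by linarith
qed

lemma stuck:
  assumes ne: "ne f lo hi" and A: "A = Acc f lo" and hiA: "hi \<notin> A"
    and noM1: "\<not> (\<exists>W z y X. W \<in> A \<and> (\<forall>U \<in> A - {W}. (rs (arc V E f) (A - {W}))\<^sup>*\<^sup>* U lo)
       \<and> z \<in> cl V f W \<and> y \<in> V \<and> f y \<notin> A \<and> {u \<in> cl V f W. E y u} = {z} \<and> X \<in> A \<and> X \<noteq> W \<and> mov V E f z X)"
    and noM2: "\<not> (\<exists>W z y v0. W \<in> A \<and> (\<forall>U \<in> A - {W}. (rs (arc V E f) (A - {W}))\<^sup>*\<^sup>* U lo)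
       \<and> z \<in> cl V f W \<and> y \<in> V \<and> f y \<notin> A \<and> {u \<in> cl V f W. E y u} = {z}
       \<and> (\<forall>X \<in> A - {W}. \<not> mov V E f z X)
       \<and> v0 \<in> V \<and> f v0 \<notin> A \<and> v0 \<noteq> y \<and> {u \<in> cl V f W. E v0 u} = {z} \<and> \<not> E v0 y)"
  shows False
proof -
  have rg: "\<forall>v\<in>V. f v < s" and los: "lo < s" and his: "hi < s" using ne unfolding ne_def by auto
  have As: "A \<subseteq> {..<s}" using A Acc_sub by simp
  have finA: "finite A" using As finite_subset by blast
  have loA: "lo \<in> A" using A acc_lo los by simp
  define Term where "Term = {W \<in> A. \<forall>U \<in> A - {W}. (rs (arc V E f) (A - {W}))\<^sup>*\<^sup>* U lo}"
  define B where "B = {v\<in>V. f v \<notin> A}"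
  define b where "b = card ({..<s} - A)"
  have finB: "finite B" unfolding B_def using finV by simp
  have b1: "1 \<le> b" unfolding b_def using his hiA
    by (metis Diff_iff One_nat_def Suc_leI card_gt_0_iff empty_iff finite_Diff finite_lessThan lessThan_iff)
  have cB: "card B = b * m + 1" unfolding B_def b_def using B_size[OF ne] hiA A by simp
  have dBy: "card {u\<in>B. E y u} + 1 \<le> b" if "y \<in> B" for y
  proof -
    have "{u\<in>B. E y u} = {u\<in>V. E y u \<and> f u \<notin> A}" unfolding B_def by auto
    then show ?thesis using B_deg[OF ne, of y] that A unfolding B_def b_def by auto
  qed
  have covB: "\<exists>u\<in>cl V f W. E y u" if "y \<in> B" "W \<in> A" for y W
    using not_mov_B[OF ne, of y W] that A unfolding B_def mov_def by auto
  have s1: "\<forall>X \<in> A - {W}. \<not> mov V E f z X"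
    if "W \<in> Term" "z \<in> cl V f W" "y \<in> B" "{u \<in> cl V f W. E y u} = {z}" for W z y
    using noM1 that unfolding Term_def B_def by blast
  have s2: "card {y\<in>B. E z y} \<le> b"
    if "W \<in> Term" "z \<in> cl V f W" "y \<in> B" "{u \<in> cl V f W. E y u} = {z}" for W z y
  proof -
    have "W \<in> A" using that(1) unfolding Term_def by auto
    moreover have "{y\<in>B. E z y} = {u\<in>V. E z u \<and> f u \<notin> A}" unfolding B_def by auto
    ultimately show ?thesis using dBz_lemma[OF ne A _ that(2) s1[OF that]] unfolding b_def by simp
  qed
  have s3: "E v0 y"
    if "W \<in> Term" "z \<in> cl V f W" "y \<in> B" "{u \<in> cl V f W. E y u} = {z}"
       "v0 \<in> B" "v0 \<noteq> y" "{u \<in> cl V f W. E v0 u} = {z}" for W z y v0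
  proof (rule ccontr)
    assume "\<not> E v0 y"
    then show False using noM2 that s1[OF that(1-4)] unfolding Term_def B_def by blast
  qed
  have outdeg: "b + 1 \<le> card {X \<in> A - {W}. arc V E f W X}" if W: "W \<in> Term" for W
  proof -
    have WA: "W \<in> A" using W unfolding Term_def by auto
    have cW: "card (cl V f W) \<le> m" using ne WA hiA As unfolding ne_def by (cases "W = lo") auto
    have "\<exists>z\<in>cl V f W. 2 * b + 1 \<le> card {y\<in>B. E z y}"
    proof (rule per_terminal[OF finite_cl finB cW cB])
      show "\<forall>y\<in>B. \<exists>z\<in>cl V f W. E y z" using covB WA by auto
      show "\<forall>u v. E u v \<longrightarrow> E v u" using Esym by auto
      show "\<forall>z\<in>cl V f W. (\<exists>y\<in>B. {u \<in> cl V f W. E y u} = {z}) \<longrightarrow> card {y\<in>B. E z y} \<le> b"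
        using s2 W by blast
    qed
    then obtain z where z: "z \<in> cl V f W" "2 * b + 1 \<le> card {y\<in>B. E z y}" by blast
    have zV: "z \<in> V" using z unfolding cl_def by auto
    have e1: "{y\<in>B. E z y} = {u\<in>V. E z u \<and> f u \<notin> A}" unfolding B_def by auto
    have ds: "card {u\<in>V. E z u \<and> f u \<in> A} + card {u\<in>V. E z u \<and> f u \<notin> A} < s"
      using deg_split[OF rg As zV] .
    have sA: "s = card A + b" unfolding b_def using card_Diff_subset[OF finA As] card_mono[OF _ As] by simp
    have "card {i\<in>A - {W}. \<not> mov V E f z i} \<le> card {u\<in>V. E z u \<and> f u \<in> A - {W}}"
      using nbr_count[OF rg, of "A - {W}" z] As by auto
    also have "\<dots> \<le> card {u\<in>V. E z u \<and> f u \<in> A}" using finV by (intro card_mono) auto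
    finally have cn: "card {i\<in>A - {W}. \<not> mov V E f z i} \<le> card {u\<in>V. E z u \<and> f u \<in> A}" .
    have big: "2 * b + 1 \<le> card {u\<in>V. E z u \<and> f u \<notin> A}" using z(2) e1 by simp
    have nm: "card {i\<in>A - {W}. \<not> mov V E f z i} + b + 2 \<le> card A" using ds cn big sA by linarith
    have part: "card {i\<in>A - {W}. mov V E f z i} + card {i\<in>A - {W}. \<not> mov V E f z i} = card A - 1"
    proof -
      have "card (A - {W}) = card {i\<in>A - {W}. mov V E f z i} + card {i\<in>A - {W}. \<not> mov V E f z i}"
        using finA by (subst card_Un_disjoint[symmetric]) (auto intro: arg_cong[where f=card])
      then show ?thesis using WA finA by (simp add: card_Diff_singleton)
    qed
    have "b + 1 \<le> card {i\<in>A - {W}. mov V E f z i}" using nm part by linarith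
    also have "\<dots> \<le> card {X \<in> A - {W}. arc V E f W X}"
    proof (rule card_mono)
      show "finite {X \<in> A - {W}. arc V E f W X}" using finA by simp
      show "{i\<in>A - {W}. mov V E f z i} \<subseteq> {X \<in> A - {W}. arc V E f W X}"
        using z(1) unfolding arc_def by auto
    qed
    finally show ?thesis .
  qed
  have allA: "\<forall>U\<in>A. (rs (arc V E f) A)\<^sup>*\<^sup>* U lo"
    using reach_Acc[OF _ los] A unfolding Acc_def by auto
  have tb: "b + 1 \<le> card Term"
    using dominator[OF finA loA allA Term_def] outdeg by blast
  define TA where "TA = {v\<in>V. f v \<in> Term}"
  define S where "S z = {y\<in>B. {u\<in>cl V f (f z). E y u} = {z}}" for z
  define d where "d y = card {u\<in>B. E y u}" for y
  have TermA: "Term \<subseteq> A" unfolding Term_def by auto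
  have finTA: "finite TA" unfolding TA_def using finV by simp
  have cTA: "card TA \<le> card Term * m"
  proof -
    have "card TA = (\<Sum>i\<in>Term. card (cl V f i))" unfolding TA_def using card_colors[OF rg] TermA As by auto
    also have "\<dots> \<le> (\<Sum>i\<in>Term. m)"
    proof (rule sum_mono)
      fix i assume "i \<in> Term"
      then have "i \<in> A" "i < s" using TermA As by auto
      then show "card (cl V f i) \<le> m" using ne hiA unfolding ne_def by (cases "i = lo") auto
    qed
    finally show ?thesis by simp
  qed
  show False
  proof (rule sigma_count[OF finTA finB cTA cB b1])
    show "b \<le> card Term" using tb by simp
    show "\<forall>z\<in>TA. S z \<subseteq> B" unfolding S_def by auto
    show "\<forall>y\<in>B. d y + 1 \<le> b" unfolding d_def using dBy by auto
    show "\<forall>y\<in>B. card Term + 1 + d y \<le> card {z \<in> TA. y \<in> S z} + b"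
    proof
      fix y assume y: "y \<in> B"
      have yV: "y \<in> V" using y unfolding B_def by auto
      define N where "N = {u\<in>V. E y u \<and> f u \<in> A}"
      have c1: "card A + card Term \<le> card N + card {z\<in>V. f z \<in> Term \<and> N \<inter> cl V f (f z) = {z}}"
      proof (rule claim1[OF finV finA TermA])
        show "N \<subseteq> {v\<in>V. f v \<in> A}" unfolding N_def by auto
        show "\<forall>i\<in>A. N \<inter> cl V f i \<noteq> {}"
        proof
          fix i assume i: "i \<in> A"
          obtain u where "u \<in> cl V f i" "E y u" using covB[OF y i] by blast
          then show "N \<inter> cl V f i \<noteq> {}" unfolding N_def cl_def using i by auto
        qed
      qed
      have eqS: "{z\<in>V. f z \<in> Term \<and> N \<inter> cl V f (f z) = {z}} = {z \<in> TA. y \<in> S z}"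
      proof -
        have "N \<inter> cl V f (f z) = {u\<in>cl V f (f z). E y u}" if "f z \<in> A" for z
          unfolding N_def cl_def using that by auto
        then show ?thesis unfolding TA_def S_def using y TermA by auto
      qed
      have ds: "card N + d y < s"
      proof -
        have "{u\<in>B. E y u} = {u\<in>V. E y u \<and> f u \<notin> A}" unfolding B_def by auto
        then show ?thesis using deg_split[OF rg As yV] unfolding N_def d_def by simp
      qed
      have sA: "s = card A + b" unfolding b_def using card_Diff_subset[OF finA As] card_mono[OF _ As] by simp
      have c1': "card A + card Term \<le> card N + card {z \<in> TA. y \<in> S z}" using c1 eqS by simp
      show "card Term + 1 + d y \<le> card {z \<in> TA. y \<in> S z} + b" using c1' ds sA by linarith
    qed
    show "\<forall>z\<in>TA. \<forall>y\<in>S z. card (S z) \<le> d y + 1"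
    proof (intro ballI)
      fix z y assume z: "z \<in> TA" and y: "y \<in> S z"
      have zc: "z \<in> cl V f (f z)" "f z \<in> Term" using z unfolding TA_def cl_def by auto
      have yB: "y \<in> B" "{u\<in>cl V f (f z). E y u} = {z}" using y unfolding S_def by auto
      have "S z - {y} \<subseteq> {u\<in>B. E y u}"
      proof
        fix v0 assume v0: "v0 \<in> S z - {y}"
        then have "v0 \<in> B" "v0 \<noteq> y" "{u\<in>cl V f (f z). E v0 u} = {z}" unfolding S_def by auto
        then have "E v0 y" using s3[OF zc(2) zc(1) yB] by blast
        then show "v0 \<in> {u\<in>B. E y u}" using Esym \<open>v0 \<in> B\<close> by auto
      qed
      then have "card (S z - {y}) \<le> d y" unfolding d_def using finB by (intro card_mono) auto
      moreover have "finite (S z)" unfolding S_def using finB by auto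
      ultimately show "card (S z) \<le> d y + 1" using y by (simp add: card_Diff_singleton)
    qed
  qed
qed

lemma NE: "ne f lo hi \<Longrightarrow> \<exists>g. eqc V E s m g"
proof (induction "card ({..<s} - Acc f lo)" arbitrary: f hi rule: less_induct)
  case less
  note ne = less.prems
  show ?case
  proof (cases "hi \<in> Acc f lo")
    case True
    then show ?thesis using shift_equit[OF ne] by blast
  next
    case hiA: False
    define A where "A = Acc f lo"
    show ?thesis
    proof (cases "\<exists>W z y X. W \<in> A \<and> (\<forall>U \<in> A - {W}. (rs (arc V E f) (A - {W}))\<^sup>*\<^sup>* U lo)
       \<and> z \<in> cl V f W \<and> y \<in> V \<and> f y \<notin> A \<and> {u \<in> cl V f W. E y u} = {z} \<and> X \<in> A \<and> X \<noteq> W \<and> mov V E f z X")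
      case True
      then obtain W z y X where c: "W \<in> A" "\<forall>U \<in> A - {W}. (rs (arc V E f) (A - {W}))\<^sup>*\<^sup>* U lo"
        "z \<in> cl V f W" "y \<in> V" "f y \<notin> A" "{u \<in> cl V f W. E y u} = {z}" "X \<in> A" "X \<noteq> W" "mov V E f z X"
        by blast
      show ?thesis using M1[OF ne A_def _ c] hiA A_def by blast
    next
      case noM1: False
      show ?thesis
      proof (cases "\<exists>W z y v0. W \<in> A \<and> (\<forall>U \<in> A - {W}. (rs (arc V E f) (A - {W}))\<^sup>*\<^sup>* U lo)
       \<and> z \<in> cl V f W \<and> y \<in> V \<and> f y \<notin> A \<and> {u \<in> cl V f W. E y u} = {z}
       \<and> (\<forall>X \<in> A - {W}. \<not> mov V E f z X)
       \<and> v0 \<in> V \<and> f v0 \<notin> A \<and> v0 \<noteq> y \<and> {u \<in> cl V f W. E v0 u} = {z} \<and> \<not> E v0 y")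
        case True
        then obtain W z y v0 where c: "W \<in> A" "\<forall>U \<in> A - {W}. (rs (arc V E f) (A - {W}))\<^sup>*\<^sup>* U lo"
          "z \<in> cl V f W" "y \<in> V" "f y \<notin> A" "{u \<in> cl V f W. E y u} = {z}"
          "\<forall>X \<in> A - {W}. \<not> mov V E f z X"
          "v0 \<in> V" "f v0 \<notin> A" "v0 \<noteq> y" "{u \<in> cl V f W. E v0 u} = {z}" "\<not> E v0 y"
          by blast
        obtain f' hi' where f': "ne f' lo hi'" "card ({..<s} - Acc f' lo) < card ({..<s} - Acc f lo)"
          using M2[OF ne A_def _ c] hiA A_def by blast
        show ?thesis using less.hyps[OF f'(2) f'(1)] .
      next
        case False
        then show ?thesis using stuck[OF ne A_def _ noM1 False] hiA A_def by blast
      qed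
    qed
  qed
qed

end


lemma trivial_partition:
  assumes "finite V" "card V = s * m"
  shows "\<exists>g. (\<forall>v\<in>V. g v < s) \<and> (\<forall>i<s. card (cl V g i) = m)"
proof (cases "m = 0")
  case True
  then have "V = {}" using assms by simp
  then show ?thesis using True unfolding cl_def by auto
next
  case False
  obtain \<phi> where phi: "bij_betw \<phi> {0..<s * m} V"
    using ex_bij_betw_nat_finite[OF assms(1)] assms(2) by auto
  define g where "g v = inv_into {0..<s * m} \<phi> v div m" for v
  have inv: "inv_into {0..<s * m} \<phi> v \<in> {0..<s * m}" "\<phi> (inv_into {0..<s * m} \<phi> v) = v" if "v \<in> V" for v
    using phi that by (auto simp: bij_betw_def inv_into_into f_inv_into_f)
  show ?thesis
  proof (intro exI[of _ g] conjI allI impI ballI)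
    fix v assume "v \<in> V"
    then have "inv_into {0..<s * m} \<phi> v < s * m" using inv by auto
    then show "g v < s" unfolding g_def by (simp add: less_mult_imp_div_less)
  next
    fix i assume i: "i < s"
    have "cl V g i = \<phi> ` {k\<in>{0..<s * m}. k div m = i}"
    proof
      show "cl V g i \<subseteq> \<phi> ` {k\<in>{0..<s * m}. k div m = i}"
      proof
        fix v assume "v \<in> cl V g i"
        then have v: "v \<in> V" "g v = i" unfolding cl_def by auto
        then show "v \<in> \<phi> ` {k\<in>{0..<s * m}. k div m = i}" using inv[OF v(1)] unfolding g_def
          by (metis (mono_tags, lifting) image_eqI mem_Collect_eq)
      qed
    next
      show "\<phi> ` {k\<in>{0..<s * m}. k div m = i} \<subseteq> cl V g i"
      proof
        fix v assume "v \<in> \<phi> ` {k\<in>{0..<s * m}. k div m = i}"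
        then obtain k where k: "k \<in> {0..<s * m}" "k div m = i" "v = \<phi> k" by auto
        have "v \<in> V" using k phi bij_betwE by blast
        moreover have "inv_into {0..<s * m} \<phi> v = k" using k phi by (simp add: bij_betw_inv_into_left)
        ultimately show "v \<in> cl V g i" unfolding cl_def g_def using k by auto
      qed
    qed
    moreover have "inj_on \<phi> {k\<in>{0..<s * m}. k div m = i}"
    proof (rule inj_on_subset)
      show "inj_on \<phi> {0..<s * m}" using phi unfolding bij_betw_def by auto
    qed auto
    moreover have "{k\<in>{0..<s * m}. k div m = i} = {i * m..<i * m + m}"
    proof -
      have mpos: "m > 0" using False by simp
      have key: "k div m = i \<longleftrightarrow> i * m \<le> k \<and> k < i * m + m" for k
      proof -
        have "k div m = i \<longleftrightarrow> i \<le> k div m \<and> k div m < Suc i" by auto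
        also have "\<dots> \<longleftrightarrow> i * m \<le> k \<and> k < Suc i * m"
          using less_eq_div_iff_mult_less_eq[OF mpos] div_less_iff_less_mult[OF mpos] by simp
        finally show ?thesis by (simp add: add.commute)
      qed
      have bnd: "i * m + m \<le> s * m"
      proof -
        have "Suc i \<le> s" using i by simp
        then have "Suc i * m \<le> s * m" by (rule mult_le_mono1)
        then show ?thesis by simp
      qed
      show ?thesis
      proof (rule set_eqI)
        fix k
        show "k \<in> {k\<in>{0..<s * m}. k div m = i} \<longleftrightarrow> k \<in> {i * m..<i * m + m}"
          using key[of k] bnd by auto
      qed
    qed
    ultimately show "card (cl V g i) = m" by (simp add: card_image)
  qed
qed

definition ecount :: "'a set \<Rightarrow> ('a \<Rightarrow> 'a \<Rightarrow> bool) \<Rightarrow> nat" where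
  "ecount V E = card {p \<in> V \<times> V. E (fst p) (snd p)}"

theorem HS:
  assumes "simple_graph V E" "\<forall>v\<in>V. degree V E v < s" "card V = s * m"
  shows "\<exists>g. eqc V E s m g"
  using assms
proof (induction "card V" arbitrary: V E s m rule: less_induct)
  case less
  have IHV: "\<forall>V'. V' \<subset> V \<longrightarrow> (\<forall>(E'::'a \<Rightarrow> 'a \<Rightarrow> bool) s' m'. simple_graph V' E' \<and> (\<forall>v\<in>V'. degree V' E' v < s')
                  \<and> card V' = s' * m' \<longrightarrow> (\<exists>g. eqc V' E' s' m' g))"
  proof (intro allI impI)
    fix V' :: "'a set" and E' :: "'a \<Rightarrow> 'a \<Rightarrow> bool" and s' m'
    assume V': "V' \<subset> V" and h: "simple_graph V' E' \<and> (\<forall>v\<in>V'. degree V' E' v < s') \<and> card V' = s' * m'"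
    have finV: "finite V" using less.prems(1) unfolding simple_graph_def by auto
    have "card V' < card V" using V' finV psubset_card_mono by blast
    then show "\<exists>g. eqc V' E' s' m' g" using less.hyps h by blast
  qed
  have finV: "finite V" using less.prems(1) unfolding simple_graph_def by auto
  show ?case
    using less.prems
  proof (induction "ecount V E" arbitrary: E rule: less_induct)
    case (less E)
    have sg: "simple_graph V E" and dg: "\<forall>v\<in>V. degree V E v < s" and cV: "card V = s * m" using less.prems by auto
    have EV: "E u v \<Longrightarrow> u \<in> V \<and> v \<in> V" and Esym: "E u v \<Longrightarrow> E v u" and Eirr: "\<not> E v v" for u v
      using sg unfolding simple_graph_def by auto
    show ?case
    proof (cases "\<exists>x y. E x y")
      case False
      obtain g where g: "\<forall>v\<in>V. g v < s" "\<forall>i<s. card (cl V g i) = m" using trivial_partition[OF finV cV] by blast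
      have "proper E g" using False unfolding proper_def by auto
      then show ?thesis using g unfolding eqc_def by auto
    next
      case True
      then obtain x y where xy: "E x y" by blast
      have xyV: "x \<in> V" "y \<in> V" "x \<noteq> y" using EV[OF xy] xy Eirr by auto
      define E' where "E' u v \<longleftrightarrow> E u v \<and> \<not> ((u = x \<and> v = y) \<or> (u = y \<and> v = x))" for u v
      have sg': "simple_graph V E'" using sg unfolding simple_graph_def E'_def by blast
      have dg': "\<forall>v\<in>V. degree V E' v < s"
      proof
        fix v assume v: "v \<in> V"
        have "degree V E' v \<le> degree V E v" unfolding degree_def E'_def using finV by (intro card_mono) auto
        then show "degree V E' v < s" using dg v by auto
      qed
      have lt: "ecount V E' < ecount V E"
      proof -
        have s1: "{p \<in> V \<times> V. E' (fst p) (snd p)} \<subseteq> {p \<in> V \<times> V. E (fst p) (snd p)}"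
          unfolding E'_def by auto
        have s2: "(x, y) \<in> {p \<in> V \<times> V. E (fst p) (snd p)}" "(x, y) \<notin> {p \<in> V \<times> V. E' (fst p) (snd p)}"
          using xy xyV unfolding E'_def by auto
        have "{p \<in> V \<times> V. E' (fst p) (snd p)} \<subset> {p \<in> V \<times> V. E (fst p) (snd p)}"
          using s1 s2 by blast
        then show ?thesis unfolding ecount_def using finV by (intro psubset_card_mono) auto
      qed
      obtain f where f: "eqc V E' s m f" using less.hyps[OF lt] sg' dg' cV by blast
      have rg: "\<forall>v\<in>V. f v < s" and pr': "proper E' f" and cf: "\<forall>i<s. card (cl V f i) = m"
        using f unfolding eqc_def by auto
      show ?thesis
      proof (cases "f x = f y")
        case False
        have "proper E f" unfolding proper_def
        proof (intro allI impI)
          fix u v assume e: "E u v"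
          show "f u \<noteq> f v"
          proof (cases "E' u v")
            case True then show ?thesis using pr' unfolding proper_def by auto
          next
            case F: False
            then have "(u = x \<and> v = y) \<or> (u = y \<and> v = x)" using e unfolding E'_def by auto
            then show ?thesis using False by auto
          qed
        qed
        then show ?thesis using rg cf unfolding eqc_def by auto
      next
        case True
        define Bc where "Bc = {..<s} - {f x}"
        define N where "N = {u\<in>V. E x u \<and> f u \<noteq> f x}"
        have fxs: "f x < s" using rg xyV by auto
        have cBc: "card Bc = s - 1" unfolding Bc_def using fxs by simp
        have "N \<subseteq> {u\<in>V. E x u} - {y}" unfolding N_def using True by auto
        moreover have "y \<in> {u\<in>V. E x u}" using xy xyV by auto
        ultimately have "card N \<le> card {u\<in>V. E x u} - 1" using finV
          by (metis (no_types, lifting) card_Diff_singleton card_mono finite_Diff finite_subset mem_Collect_eq subsetI)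
        moreover have "card {u\<in>V. E x u} < s" using dg xyV unfolding degree_def by auto
        moreover have "card {u\<in>V. E x u} > 0" using \<open>y \<in> {u\<in>V. E x u}\<close> finV card_gt_0_iff by fastforce
        ultimately have "card N < card Bc" using cBc by linarith
        then obtain j where j: "j \<in> Bc" "\<forall>u\<in>N. f u \<noteq> j"
          using free_color2[of Bc N f] finV unfolding Bc_def N_def by auto
        have js: "j < s" "j \<noteq> f x" using j unfolding Bc_def by auto
        have mv: "mov V E f x j" unfolding mov_def cl_def
        proof (intro ballI impI notI)
          fix u assume u: "u \<in> {v\<in>V. f v = j}" and e: "E x u"
          then have "u \<in> N" unfolding N_def using js by auto
          then show False using j u by auto
        qed
        define f1 where "f1 = f(x := j)"
        have pr1: "proper E f1" unfolding proper_def
        proof (intro allI impI)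
          fix u v assume e: "E u v"
          show "f1 u \<noteq> f1 v"
          proof (cases "u = x")
            case True
            then have "v \<noteq> x" using e Eirr by auto
            moreover have "f v \<noteq> j" using mv e True EV[OF e] unfolding mov_def cl_def by auto
            ultimately show ?thesis using True unfolding f1_def by auto
          next
            case ux: False
            show ?thesis
            proof (cases "v = x")
              case True
              have "f u \<noteq> j" using mv Esym[OF e] True EV[OF e] unfolding mov_def cl_def by auto
              then show ?thesis using True ux unfolding f1_def by auto
            next
              case vx: False
              have "E' u v" using e ux vx unfolding E'_def by auto
              then show ?thesis using pr' ux vx unfolding proper_def f1_def by auto
            qed
          qed
        qed
        have m1: "m \<ge> 1"
        proof (rule ccontr)
          assume "\<not> m \<ge> 1"
          then have "card V = 0" using cV by simp
          then show False using xyV finV by auto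
        qed
        have cl1: "card (cl V f1 i) = (if i = f x then card (cl V f i) - 1 else if i = j then Suc (card (cl V f i)) else card (cl V f i))" for i
          unfolding f1_def using card_cl_upd[of V x f "f x" j i] finV xyV js by auto
        have ne1: "hsctx.ne V E s m f1 (f x) j"
        proof -
          interpret h: hsctx V E s m using sg dg IHV by unfold_locales auto
          show ?thesis unfolding h.ne_def
          proof (intro conjI allI impI ballI)
            fix v assume "v \<in> V" then show "f1 v < s" unfolding f1_def using rg js by auto
          next
            show "proper E f1" by (rule pr1)
          next
            show "f x < s" by (rule fxs)
          next
            show "j < s" by (rule js(1))
          next
            show "f x \<noteq> j" using js by auto
          next
            show "card (cl V f1 (f x)) + 1 = m" using cl1[of "f x"] cf fxs m1 by simp
          next
            show "card (cl V f1 j) = m + 1" using cl1[of j] cf js by simp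
          next
            fix i assume "i < s" "i \<noteq> f x" "i \<noteq> j"
            then show "card (cl V f1 i) = m" using cl1[of i] cf by simp
          qed
        qed
        interpret h: hsctx V E s m using sg dg IHV by unfold_locales auto
        show ?thesis using h.NE[OF ne1] .
      qed
    qed
  qed
qed


lemma GHS:
  fixes V :: "'a set" and H :: "'a \<Rightarrow> 'a \<Rightarrow> bool"
  assumes sg: "simple_graph V H" and dg: "\<forall>v\<in>V. degree V H v < s" and cV: "card V \<le> s * m"
  shows "\<exists>f. (\<forall>v\<in>V. f v < s) \<and> proper H f \<and> (\<forall>i<s. card (cl V f i) \<le> m)"
proof -
  have finV: "finite V" using sg unfolding simple_graph_def by auto
  define t where "t = s * m - card V"
  define V' :: "('a + nat) set" where "V' = Inl ` V \<union> Inr ` {..<t}"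
  define H' :: "('a + nat) \<Rightarrow> ('a + nat) \<Rightarrow> bool" where
    "H' p q = (case p of Inl u \<Rightarrow> (case q of Inl v \<Rightarrow> H u v | Inr _ \<Rightarrow> False) | Inr _ \<Rightarrow> False)" for p q
  have H'I: "H' (Inl u) (Inl v) = H u v" for u v unfolding H'_def by simp
  have H'r: "\<not> H' (Inr a) q" "\<not> H' q (Inr a)" for a q unfolding H'_def by (auto split: sum.splits)
  have c1: "finite V'" unfolding V'_def using finV by simp
  have c2: "H' p q \<Longrightarrow> p \<in> V' \<and> q \<in> V'" for p q
  proof -
    assume h: "H' p q"
    then obtain u v where "p = Inl u" "q = Inl v" "H u v" unfolding H'_def by (auto split: sum.splits)
    then show "p \<in> V' \<and> q \<in> V'" using sg unfolding simple_graph_def V'_def by auto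
  qed
  have c3: "H' p q \<Longrightarrow> H' q p" for p q
  proof -
    assume h: "H' p q"
    then obtain u v where "p = Inl u" "q = Inl v" "H u v" unfolding H'_def by (auto split: sum.splits)
    then show "H' q p" using sg unfolding simple_graph_def H'_def by auto
  qed
  have c4: "\<not> H' p p" for p using sg unfolding simple_graph_def H'_def by (auto split: sum.splits)
  have sg': "simple_graph V' H'" unfolding simple_graph_def using c1 c2 c3 c4 by blast
  have dg': "\<forall>p\<in>V'. degree V' H' p < s"
  proof
    fix p assume p: "p \<in> V'"
    show "degree V' H' p < s"
    proof (cases p)
      case (Inl u)
      then have u: "u \<in> V" using p unfolding V'_def by auto
      have "{q\<in>V'. H' p q} = Inl ` {v\<in>V. H u v}" unfolding V'_def using Inl H'I H'r by auto
      then have "degree V' H' p = degree V H u" unfolding degree_def by (simp add: card_image)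
      then show ?thesis using dg u by simp
    next
      case (Inr a)
      then have "a < t" using p unfolding V'_def by auto
      then have "s > 0" unfolding t_def by (cases "s = 0") auto
      have e: "{q\<in>V'. H' p q} = {}" using Inr H'r by auto
      show ?thesis unfolding degree_def using \<open>s > 0\<close> by (subst e) simp
    qed
  qed
  have cV': "card V' = s * m"
  proof -
    have "card V' = card (Inl ` V :: ('a + nat) set) + card (Inr ` {..<t} :: ('a + nat) set)"
      unfolding V'_def
    proof (rule card_Un_disjoint)
      show "finite (Inl ` V :: ('a + nat) set)" using finV by simp
      show "finite (Inr ` {..<t} :: ('a + nat) set)" by simp
      show "(Inl ` V :: ('a + nat) set) \<inter> Inr ` {..<t} = {}" by auto
    qed
    also have "\<dots> = card V + t" by (simp add: card_image inj_on_def)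
    finally show ?thesis unfolding t_def using cV by simp
  qed
  obtain g where g: "eqc V' H' s m g" using HS[OF sg' dg' cV'] by blast
  define f where "f v = g (Inl v)" for v
  show ?thesis
  proof (intro exI[of _ f] conjI ballI allI impI)
    fix v assume "v \<in> V" then show "f v < s" using g unfolding eqc_def f_def V'_def by auto
  next
    show "proper H f" using g unfolding eqc_def proper_def f_def using H'I by metis
  next
    fix i assume i: "i < s"
    have "Inl ` cl V f i \<subseteq> cl V' g i" unfolding cl_def f_def V'_def by auto
    moreover have "finite (cl V' g i)" unfolding cl_def V'_def using finV by simp
    ultimately have "card (Inl ` cl V f i :: ('a + nat) set) \<le> card (cl V' g i)" by (meson card_mono)
    then show "card (cl V f i) \<le> m" using g i unfolding eqc_def by (simp add: card_image inj_on_def)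
  qed
qed

lemma cliques_from_coloring:
  assumes sg: "simple_graph V E" and WV: "W \<subseteq> V" and rg: "\<forall>v\<in>W. f v < s"
    and pr: "\<forall>u\<in>W. \<forall>v\<in>W. u \<noteq> v \<longrightarrow> \<not> E u v \<longrightarrow> f u \<noteq> f v"
    and cs: "\<forall>i<s. card (cl W f i) \<le> k + 1"
  shows "\<exists>C. (\<forall>S\<in>C. is_clique_copy V E (k + 1) S) \<and> (\<forall>S\<in>C. \<forall>T\<in>C. S \<noteq> T \<longrightarrow> S \<inter> T = {})
           \<and> finite C \<and> int (card W) - int s * int k \<le> int (card C)"
proof -
  have finW: "finite W" using sg WV finite_subset unfolding simple_graph_def by blast
  define F where "F = {i. i < s \<and> card (cl W f i) = k + 1}"
  define C where "C = (cl W f) ` F"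
  have finF: "finite F" unfolding F_def by simp
  have clq: "is_clique_copy V E (k + 1) (cl W f i)" if "i \<in> F" for i
    unfolding is_clique_copy_def
  proof (intro conjI ballI impI)
    show "cl W f i \<subseteq> V" using WV unfolding cl_def by auto
    show "card (cl W f i) = k + 1" using that unfolding F_def by auto
  next
    fix u v assume uv: "u \<in> cl W f i" "v \<in> cl W f i" "u \<noteq> v"
    then have "u \<in> W" "v \<in> W" "f u = f v" unfolding cl_def by auto
    then show "E u v" using pr uv(3) by blast
  qed
  have inj: "inj_on (cl W f) F"
  proof
    fix i j assume ij: "i \<in> F" "j \<in> F" "cl W f i = cl W f j"
    have "card (cl W f i) = k + 1" using ij unfolding F_def by auto
    then have "cl W f i \<noteq> {}" by auto
    then obtain v where "v \<in> cl W f i" by auto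
    then show "i = j" using ij unfolding cl_def by auto
  qed
  have cW: "card W = (\<Sum>i<s. card (cl W f i))"
  proof -
    have "W = (\<Union>i<s. cl W f i)" using rg unfolding cl_def by auto
    moreover have "card (\<Union>i<s. cl W f i) = (\<Sum>i<s. card (cl W f i))"
      using finW by (intro card_UN_disjoint) (auto simp: cl_def)
    ultimately show ?thesis by simp
  qed
  have Fsub: "F \<subseteq> {..<s}" unfolding F_def by auto
  have "(\<Sum>i<s. card (cl W f i)) = (\<Sum>i\<in>F. card (cl W f i)) + (\<Sum>i\<in>{..<s} - F. card (cl W f i))"
    using Fsub by (metis finite_lessThan sum.subset_diff add.commute)
  also have "\<dots> \<le> (\<Sum>i\<in>F. k + 1) + (\<Sum>i\<in>{..<s} - F. k)"
  proof (intro add_mono sum_mono)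
    fix i assume "i \<in> F" then show "card (cl W f i) \<le> k + 1" unfolding F_def by auto
  next
    fix i assume "i \<in> {..<s} - F"
    then show "card (cl W f i) \<le> k" using cs unfolding F_def by fastforce
  qed
  also have "\<dots> = card F * (k + 1) + (s - card F) * k"
    using Fsub finF by (simp add: card_Diff_subset)
  finally have le: "card W \<le> card F * (k + 1) + (s - card F) * k" using cW by simp
  have cFs: "card F \<le> s" using card_mono[OF _ Fsub] by simp
  have "int (card W) \<le> int (card F) * (int k + 1) + (int s - int (card F)) * int k"
    using le cFs by (simp add: of_nat_diff algebra_simps flip: of_nat_mult of_nat_add)
  then have "int (card W) - int s * int k \<le> int (card F)" by (simp add: algebra_simps)
  moreover have "card C = card F" unfolding C_def using inj by (simp add: card_image)
  moreover have "\<forall>S\<in>C. \<forall>T\<in>C. S \<noteq> T \<longrightarrow> S \<inter> T = {}" unfolding C_def cl_def by auto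
  moreover have "finite C" unfolding C_def using finF by simp
  moreover have "\<forall>S\<in>C. is_clique_copy V E (k + 1) S" using clq unfolding C_def by auto
  ultimately show ?thesis by (intro exI[of _ C]) auto
qed


theorem corollary2p5:
  fixes V :: "'a set" and E :: "'a \<Rightarrow> 'a \<Rightarrow> bool" and k n :: nat
  assumes "simple_graph V E"
    and "k \<ge> 1"
    and "n = card V"
    and "n \<ge> k * (k + 1)"
    and "real (min_degree V E) \<ge> real (k - 1) * real n / real k"
  shows "\<exists>\<C>. (\<forall>S\<in>\<C>. is_clique_copy V E (k + 1) S)
             \<and> (\<forall>S\<in>\<C>. \<forall>T\<in>\<C>. S \<noteq> T \<longrightarrow> S \<inter> T = {})
             \<and> int (card \<C>) = min (int k * int (min_degree V E) - (int k - 1) * int n)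
                                   (int (n div (k + 1)))"
proof -
  note sg = assms(1) and k1 = assms(2) and nV = assms(3) and nk = assms(4) and dlt = assms(5)
  define d where "d = min_degree V E"
  have finV: "finite V" using sg unfolding simple_graph_def by auto
  have "1 * 2 \<le> k * (k + 1)" using k1 by (intro mult_le_mono) auto
  then have n2: "n \<ge> 2" using nk by linarith
  have Vne: "V \<noteq> {}" using n2 nV by auto
  have dle: "\<forall>v\<in>V. d \<le> degree V E v" unfolding d_def min_degree_def using finV by auto
  have degle: "degree V E v \<le> n - 1" if "v \<in> V" for v
  proof -
    have "{u\<in>V. E v u} \<subseteq> V - {v}" using sg unfolding simple_graph_def by auto
    then have "card {u\<in>V. E v u} \<le> card (V - {v})" using finV by (intro card_mono) auto
    then show ?thesis unfolding degree_def using that finV nV by (simp add: card_Diff_singleton)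
  qed
  obtain v0 where v0: "v0 \<in> V" using Vne by auto
  have dn: "d < n" using dle degle[OF v0] v0 n2 by fastforce
  have kd: "(k - 1) * n \<le> k * d"
  proof -
    have kpos: "real k > 0" using k1 by simp
    have "real (k - 1) * real n \<le> real d * real k" using dlt kpos unfolding d_def by (simp add: pos_divide_le_eq)
    then have "real ((k - 1) * n) \<le> real (k * d)" by (simp add: mult.commute)
    then show ?thesis by (simp only: of_nat_le_iff)
  qed
  define H where "H u v \<longleftrightarrow> u \<in> V \<and> v \<in> V \<and> u \<noteq> v \<and> \<not> E u v" for u v
  have Esym: "E u v \<Longrightarrow> E v u" for u v using sg unfolding simple_graph_def by auto
  have sgH: "simple_graph V H" unfolding simple_graph_def H_def using finV Esym by auto
  define D where "D = n - d"
  have degHD: "\<forall>v\<in>V. degree V H v < D"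
  proof
    fix v assume v: "v \<in> V"
    have e: "{u\<in>V. H v u} = (V - {v}) - {u\<in>V. E v u}" unfolding H_def using v by auto
    have "{u\<in>V. E v u} \<subseteq> V - {v}" using sg unfolding simple_graph_def by auto
    then have "card {u\<in>V. H v u} = card (V - {v}) - card {u\<in>V. E v u}"
      unfolding e using finV by (intro card_Diff_subset) auto
    then have "degree V H v = n - 1 - degree V E v" unfolding degree_def using v finV nV by (simp add: card_Diff_singleton)
    then show "degree V H v < D" unfolding D_def using dle v dn degle[OF v] by auto
  qed
  define p where "p = int k * int d - (int k - 1) * int n"
  define Q where "Q = n div (k + 1)"
  have p0: "0 \<le> p" unfolding p_def using kd k1 by (simp add: of_nat_diff algebra_simps flip: of_nat_mult)
  have QQ: "(k + 1) * Q \<le> n" unfolding Q_def by (metis div_times_less_eq_dividend mult.commute)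
  have intD: "int D = int n - int d" unfolding D_def using dn by simp
  have pD: "p = int n - int D * int k" unfolding p_def intD by (simp add: algebra_simps)
  have key: "\<exists>C0. (\<forall>S\<in>C0. is_clique_copy V E (k + 1) S) \<and> (\<forall>S\<in>C0. \<forall>T\<in>C0. S \<noteq> T \<longrightarrow> S \<inter> T = {})
           \<and> finite C0 \<and> min p (int Q) \<le> int (card C0)"
  proof (cases "p \<le> int Q")
    case True
    have h1: "(int k + 1) * p \<le> int n"
    proof -
      have "(int k + 1) * p \<le> (int k + 1) * int Q" using True by simp
      also have "\<dots> = int ((k + 1) * Q)" by (simp add: algebra_simps)
      also have "\<dots> \<le> int n" using QQ by (simp only: of_nat_le_iff)
      finally show ?thesis .
    qed
    have e: "(int k + 1) * p = int k * ((int k + 1) * int d) - int k * (int k * int n) + int n"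
      unfolding p_def by (simp add: algebra_simps)
    have "int k * ((int k + 1) * int d) \<le> int k * (int k * int n)" using h1 e by linarith
    then have h2: "(int k + 1) * int d \<le> int k * int n" using k1 by (simp add: mult_le_cancel_left_pos)
    have "int n \<le> (int n - int d) * (int k + 1)" using h2 by (simp add: algebra_simps)
    then have "int n \<le> int D * (int k + 1)" unfolding intD .
    then have "int n \<le> int (D * (k + 1))" by (simp add: algebra_simps)
    then have nD: "card V \<le> D * (k + 1)" using nV by (simp only: of_nat_le_iff)
    obtain f where f: "\<forall>v\<in>V. f v < D" "proper H f" "\<forall>i<D. card (cl V f i) \<le> k + 1"
      using GHS[OF sgH degHD nD] by blast
    have pr: "\<forall>u\<in>V. \<forall>v\<in>V. u \<noteq> v \<longrightarrow> \<not> E u v \<longrightarrow> f u \<noteq> f v"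
      using f(2) unfolding proper_def H_def by auto
    obtain C0 where C0: "\<forall>S\<in>C0. is_clique_copy V E (k + 1) S" "\<forall>S\<in>C0. \<forall>T\<in>C0. S \<noteq> T \<longrightarrow> S \<inter> T = {}"
      "finite C0" "int (card V) - int D * int k \<le> int (card C0)"
      using cliques_from_coloring[OF sg subset_refl f(1) pr f(3)] by blast
    have "min p (int Q) \<le> int (card C0)" using C0(4) pD nV True by simp
    then show ?thesis using C0 by blast
  next
    case False
    have h1: "int Q + 1 \<le> int n - int k * int D" using False pD by (simp add: algebra_simps)
    have nm: "n \<le> (k + 1) * Q + k"
    proof -
      have "n = (k + 1) * Q + n mod (k + 1)" unfolding Q_def using div_mult_mod_eq[of n "k + 1"] by (simp only: mult.commute)
      moreover have "n mod (k + 1) \<le> k" by (metis less_Suc_eq_le mod_less_divisor zero_less_Suc add.commute plus_1_eq_Suc)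
      ultimately show ?thesis by linarith
    qed
    then have "int n \<le> (int k + 1) * int Q + int k" by (metis of_nat_add of_nat_le_iff of_nat_mult of_nat_1 of_nat_Suc)
    then have "int k * int D < int k * (int Q + 1)" using h1 by (simp add: algebra_simps)
    then have "int D < int Q + 1" using k1 by (simp add: mult_less_cancel_left_pos)
    then have DQ: "D \<le> Q" by simp
    have "Q * (k + 1) \<le> card V" using QQ nV by (simp add: mult.commute)
    then obtain V0 where V0: "V0 \<subseteq> V" "card V0 = Q * (k + 1)" "finite V0"
      by (meson obtain_subset_with_card_n)
    define H0 where "H0 u v \<longleftrightarrow> H u v \<and> u \<in> V0 \<and> v \<in> V0" for u v
    have sgH0: "simple_graph V0 H0" unfolding simple_graph_def H0_def H_def using V0 Esym by auto
    have dg0: "\<forall>v\<in>V0. degree V0 H0 v < Q"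
    proof
      fix v assume v: "v \<in> V0"
      have "degree V0 H0 v \<le> degree V H v" unfolding degree_def H0_def using finV V0 by (intro card_mono) auto
      then show "degree V0 H0 v < Q" using degHD v V0 DQ by fastforce
    qed
    obtain f where f: "\<forall>v\<in>V0. f v < Q" "proper H0 f" "\<forall>i<Q. card (cl V0 f i) \<le> k + 1"
      using GHS[OF sgH0 dg0, of "k + 1"] V0 by auto
    have pr: "\<forall>u\<in>V0. \<forall>v\<in>V0. u \<noteq> v \<longrightarrow> \<not> E u v \<longrightarrow> f u \<noteq> f v"
      using f(2) V0 unfolding proper_def H0_def H_def by auto
    obtain C0 where C0: "\<forall>S\<in>C0. is_clique_copy V E (k + 1) S" "\<forall>S\<in>C0. \<forall>T\<in>C0. S \<noteq> T \<longrightarrow> S \<inter> T = {}"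
      "finite C0" "int (card V0) - int Q * int k \<le> int (card C0)"
      using cliques_from_coloring[OF sg V0(1) f(1) pr f(3)] by blast
    have "int (card V0) - int Q * int k = int Q" using V0(2) by (simp add: algebra_simps)
    then have "min p (int Q) \<le> int (card C0)" using C0(4) by simp
    then show ?thesis using C0 by blast
  qed
  then obtain C0 where C0: "\<forall>S\<in>C0. is_clique_copy V E (k + 1) S" "\<forall>S\<in>C0. \<forall>T\<in>C0. S \<noteq> T \<longrightarrow> S \<inter> T = {}"
    "finite C0" "min p (int Q) \<le> int (card C0)" by blast
  have mp: "0 \<le> min p (int Q)" using p0 by simp
  have "nat (min p (int Q)) \<le> card C0" using C0(4) mp by linarith
  then obtain C where C: "C \<subseteq> C0" "card C = nat (min p (int Q))" by (meson obtain_subset_with_card_n)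
  have "int (card C) = min p (int Q)" using C(2) mp by simp
  moreover have eq: "min p (int Q) = min (int k * int (min_degree V E) - (int k - 1) * int n) (int (n div (k + 1)))"
    unfolding p_def Q_def d_def by simp
  ultimately have c3: "int (card C) = min (int k * int (min_degree V E) - (int k - 1) * int n) (int (n div (k + 1)))"
    by simp
  have c1: "\<forall>S\<in>C. is_clique_copy V E (k + 1) S" using C(1) C0(1) by blast
  have c2: "\<forall>S\<in>C. \<forall>T\<in>C. S \<noteq> T \<longrightarrow> S \<inter> T = {}" using C(1) C0(2) by blast
  show ?thesis using c1 c2 c3 by blast
qed


end
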